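(* Let $G$ be a group, $s,t\in G$ with $s\neq t$, and $\Gamma=\Phi(G,\{s,t\})$. (a) If $I\Gamma$ is a $G$-graph, then there exists a map $f:\langle s,t\rangle\to\langle s,t\rangle$ such that $f\circ f=\mathrm{id}$, $f(e)=e$, and for every $x\in\langle s,t\rangle$ there exist $m,n\in\mathbb{Z}$ with $f(sx)=t^mf(x)$ and $f(tx)=s^nf(x)$. (b) Conversely, if there exists a group homomorphism $f:\langle s,t\rangle\to\langle s,t\rangle$ such that $f\circ f=\mathrm{id}$, $f(e)=e$, and for every $x\in\langle s,t\rangle$ there exist $m,n\in\mathbb{Z}$ with $f(sx)=t^mf(x)$ and $f(tx)=s^nf(x)$, then $I\Gamma$ is a $G$-graph.
   Context: $e$ is the identity of $G$. $\Phi(G,\{s,t\})$ is the multigraph with vertex set $V_s\cup V_t$, $V_s=\{\langle s\rangle x: x\in G\}$, $V_t=\{\langle t\rangle y: y\in G\}$ (right cosets), with one edge labeled $g$ between $\langle s\rangle x$ and $\langle t\rangle y$ for each $g\in\langle s\rangle x\cap\langle t\rangle y$, and no other edges. More generally, for a group $K$ and a multiset $S$ of elements of $K$, $\Phi(K,S)$ has vertex set the union over members $s$ of $S$ (with multiplicity) of the right cosets of $\langle s\rangle$, with one edge labeled $g$ between $\langle s\rangle x$ and $\langle t\rangle y$ ($s,t$ distinct members of $S$) for each $g$ in their intersection; a $G$-graph is a multigraph isomorphic (ignoring labels) to some $\Phi(K,S)$. For a multigraph $\Gamma=(V,E,\psi)$, the incidence graph $I\Gamma$ is the simple graph with vertex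 set $V\cup E$ in which each $a\in E$ is adjacent exactly to its end-points. *)

theory Defs
  imports "HOL-Algebra.Algebra"
begin

text \<open>A multigraph is a triple (V, E, psi): vertex set, edge set, and the map
  sending each edge to the set of its end-points.\<close>
type_synonym ('v, 'e) mgraph = "'v set \<times> 'e set \<times> ('e \<Rightarrow> 'v set)"

definition mg_iso :: "('v, 'e) mgraph \<Rightarrow> ('w, 'f) mgraph \<Rightarrow> bool" where
  "mg_iso \<Gamma> \<Delta> \<longleftrightarrow>
     (case \<Gamma> of (V1, E1, psi1) \<Rightarrow> case \<Delta> of (V2, E2, psi2) \<Rightarrow>
       (\<exists>\<alpha> \<beta>. bij_betw \<alpha> V1 V2 \<and> bij_betw \<beta> E1 E2 \<and>
              (\<forall>a\<in>E1. psi2 (\<beta> a) = \<alpha> ` psi1 a)))"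

text \<open>Phi(K,S) for a list S (a multiset with an order on its members).\<close>
definition Phi_vertices :: "('k, 'm) monoid_scheme \<Rightarrow> 'k list \<Rightarrow> (nat \<times> 'k set) set" where
  "Phi_vertices K S = {(i, C). i < length S \<and> C \<in> rcosets\<^bsub>K\<^esub> (generate K {S ! i})}"

definition Phi :: "('k, 'm) monoid_scheme \<Rightarrow> 'k list
    \<Rightarrow> (nat \<times> 'k set, (nat \<times> 'k set) \<times> (nat \<times> 'k set) \<times> 'k) mgraph" where
  "Phi K S =
     (Phi_vertices K S,
      {(u, w, g). u \<in> Phi_vertices K S \<and> w \<in> Phi_vertices K S \<and> fst u < fst w
                  \<and> g \<in> snd u \<inter> snd w},
      (\<lambda>(u, w, g). {u, w}))"

definition incidence :: "('v, 'e) mgraph \<Rightarrow> ('v + 'e, 'v \<times> 'e) mgraph" where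
  "incidence \<Gamma> = (case \<Gamma> of (V, E, psi) \<Rightarrow>
     (V <+> E, {(v, a). a \<in> E \<and> v \<in> psi a}, (\<lambda>(v, a). {Inl v, Inr a})))"

text \<open>G-graph, with the group K taken on carrier type 'k.\<close>
definition G_graph :: "'k itself \<Rightarrow> ('v, 'e) mgraph \<Rightarrow> bool" where
  "G_graph (_::'k itself) \<Gamma> \<longleftrightarrow>
     (\<exists>(K::'k monoid) S. group K \<and> set S \<subseteq> carrier K \<and> mg_iso \<Gamma> (Phi K S))"

end

theory Submission
  imports Defs
begin


lemma PV2:
  "(i, C) \<in> Phi_vertices K [a,b] \<longleftrightarrow>
     (i = 0 \<and> C \<in> rcosets\<^bsub>K\<^esub> (generate K {a})) \<or> (i = 1 \<and> C \<in> rcosets\<^bsub>K\<^esub> (generate K {b}))"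
  unfolding Phi_vertices_def by (auto simp: less_Suc_eq)

lemma gen_iso:
  fixes K :: "('k,'m) monoid_scheme" (structure)
  assumes grp: "group K" and a: "a \<in> carrier K" and b: "b \<in> carrier K"
    and bij: "bij_betw \<beta> E (carrier K)"
    and psi: "\<And>e. e \<in> E \<Longrightarrow> psi e = {P e, Q e}"
    and V: "V = P ` E \<union> Q ` E"
    and PQ: "\<And>e e'. e \<in> E \<Longrightarrow> e' \<in> E \<Longrightarrow> P e \<noteq> Q e'"
    and Pc: "\<And>e e'. e \<in> E \<Longrightarrow> e' \<in> E \<Longrightarrow> P e = P e' \<longleftrightarrow> generate K {a} #>\<^bsub>K\<^esub> \<beta> e = generate K {a} #>\<^bsub>K\<^esub> \<beta> e'"
    and Qc: "\<And>e e'. e \<in> E \<Longrightarrow> e' \<in> E \<Longrightarrow> Q e = Q e' \<longleftrightarrow> generate K {b} #>\<^bsub>K\<^esub> \<beta> e = generate K {b} #>\<^bsub>K\<^esub> \<beta> e'"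
  shows "mg_iso (V, E, psi) (Phi K [a,b])"
proof -
  interpret group K by fact
  define A where "A = generate K {a}"
  define B where "B = generate K {b}"
  have sA: "subgroup A K" using generate_is_subgroup a by (simp add: A_def)
  have sB: "subgroup B K" using generate_is_subgroup b by (simp add: B_def)
  have bc: "\<And>e. e \<in> E \<Longrightarrow> \<beta> e \<in> carrier K" using bij by (auto simp: bij_betw_def)
  define al where "al v = (if v \<in> P ` E then (0::nat, A #> \<beta> (SOME e. e \<in> E \<and> P e = v))
      else (1::nat, B #> \<beta> (SOME e. e \<in> E \<and> Q e = v)))" for v
  define be where "be e = ((0::nat, A #> \<beta> e), (1::nat, B #> \<beta> e), \<beta> e)" for e
  have alP: "al (P e) = (0, A #> \<beta> e)" if "e \<in> E" for e
  proof -
    have ex: "\<exists>e'. e' \<in> E \<and> P e' = P e" using that by blast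
    from someI_ex[OF ex] have "(SOME e'. e' \<in> E \<and> P e' = P e) \<in> E \<and> P (SOME e'. e' \<in> E \<and> P e' = P e) = P e" .
    then show ?thesis using that Pc unfolding al_def A_def by auto
  qed
  have alQ: "al (Q e) = (1, B #> \<beta> e)" if "e \<in> E" for e
  proof -
    have nP: "Q e \<notin> P ` E" using PQ that by fastforce
    have ex: "\<exists>e'. e' \<in> E \<and> Q e' = Q e" using that by blast
    from someI_ex[OF ex] have "(SOME e'. e' \<in> E \<and> Q e' = Q e) \<in> E \<and> Q (SOME e'. e' \<in> E \<and> Q e' = Q e) = Q e" .
    then show ?thesis using that Qc nP unfolding al_def B_def by auto
  qed
  have bijV: "bij_betw al V (Phi_vertices K [a,b])"
  proof (rule bij_betw_imageI)
    show "inj_on al V"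
    proof (rule inj_onI)
      fix x y assume "x \<in> V" "y \<in> V" "al x = al y"
      then show "x = y" unfolding V
        using alP alQ Pc Qc by (auto simp: A_def B_def)
    qed
    show "al ` V = Phi_vertices K [a,b]"
    proof
      show "al ` V \<subseteq> Phi_vertices K [a,b]"
        using alP alQ bc sA sB by (auto simp: V PV2 A_def B_def intro!: rcosetsI subgroup.subset)
      show "Phi_vertices K [a,b] \<subseteq> al ` V"
      proof
        fix v assume "v \<in> Phi_vertices K [a,b]"
        then obtain i C where v: "v = (i, C)" and
          c: "(i = 0 \<and> C \<in> rcosets A) \<or> (i = 1 \<and> C \<in> rcosets B)"
          by (cases v) (auto simp: PV2 A_def B_def)
        then show "v \<in> al ` V"
        proof (elim disjE conjE)
          assume "i = 0" "C \<in> rcosets A"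
          then obtain x where x: "x \<in> carrier K" "C = A #> x" by (auto simp: RCOSETS_def)
          then obtain e where "e \<in> E" "\<beta> e = x" using bij unfolding bij_betw_def by (metis imageE)
          then show ?thesis using alP[of e] x v \<open>i = 0\<close> V by (auto intro!: image_eqI[of _ _ "P e"])
        next
          assume "i = 1" "C \<in> rcosets B"
          then obtain x where x: "x \<in> carrier K" "C = B #> x" by (auto simp: RCOSETS_def)
          then obtain e where "e \<in> E" "\<beta> e = x" using bij unfolding bij_betw_def by (metis imageE)
          then show ?thesis using alQ[of e] x v \<open>i = 1\<close> V by (auto intro!: image_eqI[of _ _ "Q e"])
        qed
      qed
    qed
  qed
  have edges: "{(u, w, g). u \<in> Phi_vertices K [a,b] \<and> w \<in> Phi_vertices K [a,b] \<and> fst u < fst w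
                  \<and> g \<in> snd u \<inter> snd w} = be ` E" (is "?S = _")
  proof
    show "?S \<subseteq> be ` E"
    proof
      fix x assume "x \<in> ?S"
      then obtain i C j D g where x: "x = ((i,C),(j,D),g)" "(i,C) \<in> Phi_vertices K [a,b]"
        "(j,D) \<in> Phi_vertices K [a,b]" "i < j" "g \<in> C" "g \<in> D" by auto
      then have ij: "i = 0" "j = 1" "C \<in> rcosets A" "D \<in> rcosets B" by (auto simp: PV2 A_def B_def)
      then obtain y z where y: "y \<in> carrier K" "C = A #> y" and z: "z \<in> carrier K" "D = B #> z"
        by (auto simp: RCOSETS_def)
      have C: "C = A #> g" using repr_independence[of g A y] x y sA by simp
      have D: "D = B #> g" using repr_independence[of g B z] x z sB by simp
      have "g \<in> carrier K" using C y x(5) sA by (metis subgroup.elemrcos_carrier grp)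
      then obtain e where "e \<in> E" "\<beta> e = g" using bij unfolding bij_betw_def by (metis imageE)
      then show "x \<in> be ` E" using x ij C D by (auto simp: be_def)
    qed
    show "be ` E \<subseteq> ?S"
      using bc sA sB by (auto simp: be_def PV2 A_def B_def intro!: rcosetsI subgroup.subset rcos_self)
  qed
  have bijE: "bij_betw be E (be ` E)"
  proof (rule bij_betw_imageI)
    show "inj_on be E" using bij by (auto simp: be_def bij_betw_def inj_on_def)
  qed simp
  have "\<forall>e\<in>E. (\<lambda>(u, w, g). {u, w}) (be e) = al ` psi e"
    using alP alQ psi by (auto simp: be_def)
  then show ?thesis unfolding mg_iso_def Phi_def using bijV bijE edges
    by auto
qed



definition tr :: "('a,'m) monoid_scheme \<Rightarrow> ('a \<Rightarrow> 'c) \<Rightarrow> 'c set \<Rightarrow> 'c monoid" where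
  "tr M \<phi> C = \<lparr>carrier = C,
     monoid.mult = (\<lambda>x y. \<phi> (inv_into (carrier M) \<phi> x \<otimes>\<^bsub>M\<^esub> inv_into (carrier M) \<phi> y)),
     one = \<phi> \<one>\<^bsub>M\<^esub>\<rparr>"

lemma tr_group:
  assumes grp: "group M" and bij: "bij_betw \<phi> (carrier M) C"
  shows "group (tr M \<phi> C)" and "\<phi> \<in> iso M (tr M \<phi> C)"
proof -
  interpret M: group M by fact
  define \<psi> where "\<psi> = inv_into (carrier M) \<phi>"
  have p1: "\<psi> x \<in> carrier M" "\<phi> (\<psi> x) = x" if "x \<in> C" for x
    using that bij unfolding \<psi>_def bij_betw_def by (auto intro: inv_into_into f_inv_into_f)
  have p2: "\<psi> (\<phi> u) = u" if "u \<in> carrier M" for u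
    using that bij unfolding \<psi>_def bij_betw_def by auto
  have p3: "\<phi> u \<in> C" if "u \<in> carrier M" for u
    using that bij unfolding bij_betw_def by auto
  have m: "x \<otimes>\<^bsub>tr M \<phi> C\<^esub> y = \<phi> (\<psi> x \<otimes>\<^bsub>M\<^esub> \<psi> y)" for x y by (simp add: tr_def \<psi>_def)
  have c: "carrier (tr M \<phi> C) = C" and o: "\<one>\<^bsub>tr M \<phi> C\<^esub> = \<phi> \<one>\<^bsub>M\<^esub>" by (simp_all add: tr_def)
  show "group (tr M \<phi> C)"
  proof (rule groupI)
    show "x \<otimes>\<^bsub>tr M \<phi> C\<^esub> y \<in> carrier (tr M \<phi> C)" if "x \<in> carrier (tr M \<phi> C)" "y \<in> carrier (tr M \<phi> C)" for x y
      using that by (simp add: m c p1 p3)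
    show "\<one>\<^bsub>tr M \<phi> C\<^esub> \<in> carrier (tr M \<phi> C)" by (simp add: c o p3)
    show "x \<otimes>\<^bsub>tr M \<phi> C\<^esub> y \<otimes>\<^bsub>tr M \<phi> C\<^esub> z = x \<otimes>\<^bsub>tr M \<phi> C\<^esub> (y \<otimes>\<^bsub>tr M \<phi> C\<^esub> z)"
      if "x \<in> carrier (tr M \<phi> C)" "y \<in> carrier (tr M \<phi> C)" "z \<in> carrier (tr M \<phi> C)" for x y z
      using that by (simp add: m c p1 p2 M.m_assoc)
    show "\<one>\<^bsub>tr M \<phi> C\<^esub> \<otimes>\<^bsub>tr M \<phi> C\<^esub> x = x" if "x \<in> carrier (tr M \<phi> C)" for x
      using that by (simp add: m c o p1 p2)
    show "\<exists>y\<in>carrier (tr M \<phi> C). y \<otimes>\<^bsub>tr M \<phi> C\<^esub> x = \<one>\<^bsub>tr M \<phi> C\<^esub>" if "x \<in> carrier (tr M \<phi> C)" for x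
      using that by (intro bexI[of _ "\<phi> (inv\<^bsub>M\<^esub> (\<psi> x))"]) (simp_all add: m c o p1 p2 p3)
  qed
  show "\<phi> \<in> iso M (tr M \<phi> C)"
    unfolding iso_def hom_def using bij p3 by (auto simp: m c p2)
qed

lemma iso_rcos_eq:
  assumes gM: "group M" and gK: "group K" and iso: "\<phi> \<in> iso M K"
    and a: "a \<in> carrier M" and x: "x \<in> carrier M" and y: "y \<in> carrier M"
  shows "(generate K {\<phi> a} #>\<^bsub>K\<^esub> \<phi> x = generate K {\<phi> a} #>\<^bsub>K\<^esub> \<phi> y) \<longleftrightarrow>
         (generate M {a} #>\<^bsub>M\<^esub> x = generate M {a} #>\<^bsub>M\<^esub> y)"
proof -
  interpret M: group M by fact
  interpret K: group K by fact
  have gh: "group_hom M K \<phi>" using iso gM gK by (auto simp: group_hom_def group_hom_axioms_def iso_def)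
  interpret h: group_hom M K \<phi> by fact
  have inj: "inj_on \<phi> (carrier M)" using iso by (auto simp: iso_def bij_betw_def)
  have gen: "generate K {\<phi> a} = \<phi> ` generate M {a}"
    using h.generate_img[of "{a}"] a by simp
  have U: "generate M {a} \<subseteq> carrier M" using M.generate_in_carrier a by blast
  have img: "(\<phi> ` U) #>\<^bsub>K\<^esub> \<phi> z = \<phi> ` (U #>\<^bsub>M\<^esub> z)" if "U \<subseteq> carrier M" "z \<in> carrier M" for U z
    using that unfolding r_coset_def by (force simp: subset_iff)
  have sub: "U #>\<^bsub>M\<^esub> z \<subseteq> carrier M" if "U \<subseteq> carrier M" "z \<in> carrier M" for U z
    using that M.r_coset_subset_G by blast
  show ?thesis unfolding gen img[OF U x] img[OF U y]
    using inj_on_image_eq_iff[OF inj sub[OF U x] sub[OF U y]] .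
qed

lemma exists_group_on:
  fixes T :: "'a set"
  assumes "T \<noteq> {}"
  shows "\<exists>Q :: 'a monoid. group Q \<and> carrier Q = T"
proof (cases "finite T")
  case True
  define n where "n = card T"
  have n: "n \<noteq> 0" using True assms by (simp add: n_def)
  have "{0..<int n} \<approx> T" using True by (subst eqpoll_iff_card) (auto simp: n_def)
  then obtain \<phi> where \<phi>: "bij_betw \<phi> (carrier (integer_mod_group n)) T"
    using n by (auto simp: eqpoll_def carrier_integer_mod_group)
  show ?thesis
    using tr_group(1)[OF group_integer_mod_group \<phi>] by (intro exI[of _ "tr (integer_mod_group n) \<phi> T"]) (simp add: tr_def)
next
  case False
  then obtain \<phi> where \<phi>: "bij_betw \<phi> (carrier (free_Abelian_group T)) T"
    using eqpoll_free_Abelian_group_infinite by (auto simp: eqpoll_def)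
  show ?thesis
    using tr_group(1)[OF group_free_Abelian_group \<phi>] by (intro exI[of _ "tr (free_Abelian_group T) \<phi> T"]) (simp add: tr_def)
qed



definition adj :: "('v,'e) mgraph \<Rightarrow> 'v \<Rightarrow> 'v \<Rightarrow> bool" where
  "adj Gr p q \<longleftrightarrow> (case Gr of (V,E,psi) \<Rightarrow> \<exists>e\<in>E. psi e = {p,q})"

lemma adj_sym: "adj Gr p q \<Longrightarrow> adj Gr q p"
  unfolding adj_def by (auto split: prod.splits simp: insert_commute)

lemma mg_iso_adj:
  assumes iso: "mg_iso (V1,E1,psi1) (V2,E2,psi2)"
    and wf1: "\<forall>e\<in>E1. psi1 e \<subseteq> V1"
    and simple1: "inj_on psi1 E1"
  shows "\<exists>\<alpha>. bij_betw \<alpha> V1 V2 \<and> (\<forall>p\<in>V1. \<forall>q\<in>V1. adj (V1,E1,psi1) p q \<longleftrightarrow> adj (V2,E2,psi2) (\<alpha> p) (\<alpha> q))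
        \<and> inj_on psi2 E2"
proof -
  obtain \<alpha> \<beta> where a: "bij_betw \<alpha> V1 V2" and b: "bij_betw \<beta> E1 E2"
    and c: "\<forall>e\<in>E1. psi2 (\<beta> e) = \<alpha> ` psi1 e"
    using iso unfolding mg_iso_def by auto
  have ia: "inj_on \<alpha> V1" using a by (auto simp: bij_betw_def)
  have E2: "E2 = \<beta> ` E1" using b by (auto simp: bij_betw_def)
  have key: "psi1 e = {p,q} \<longleftrightarrow> psi2 (\<beta> e) = {\<alpha> p, \<alpha> q}" if "e \<in> E1" "p \<in> V1" "q \<in> V1" for e p q
  proof -
    have "psi2 (\<beta> e) = \<alpha> ` psi1 e" using c that by auto
    moreover have "{\<alpha> p, \<alpha> q} = \<alpha> ` {p,q}" by simp
    moreover have "\<alpha> ` psi1 e = \<alpha> ` {p,q} \<longleftrightarrow> psi1 e = {p,q}"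
      by (rule inj_on_image_eq_iff[OF ia]) (use wf1 that in auto)
    ultimately show ?thesis by simp
  qed
  have "\<forall>p\<in>V1. \<forall>q\<in>V1. adj (V1,E1,psi1) p q \<longleftrightarrow> adj (V2,E2,psi2) (\<alpha> p) (\<alpha> q)"
    unfolding adj_def E2 using key by auto
  moreover have "inj_on psi2 E2"
  proof (rule inj_onI)
    fix x y assume "x \<in> E2" "y \<in> E2" "psi2 x = psi2 y"
    then obtain e1 e2 where "e1 \<in> E1" "e2 \<in> E1" "x = \<beta> e1" "y = \<beta> e2" "\<alpha> ` psi1 e1 = \<alpha> ` psi1 e2"
      using E2 c by auto
    then have "psi1 e1 = psi1 e2" using inj_on_image_eq_iff[OF ia] wf1 by blast
    then show "x = y" using simple1 \<open>e1 \<in> E1\<close> \<open>e2 \<in> E1\<close> \<open>x = \<beta> e1\<close> \<open>y = \<beta> e2\<close>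
      by (auto dest: inj_onD)
  qed
  ultimately show ?thesis using a by blast
qed

lemma Phi_parts:
  "Phi K S = (Phi_vertices K S,
      {(u, w, g). u \<in> Phi_vertices K S \<and> w \<in> Phi_vertices K S \<and> fst u < fst w \<and> g \<in> snd u \<inter> snd w},
      (\<lambda>(u, w, g). {u, w}))"
  by (simp add: Phi_def)

lemma adj_Phi:
  "adj (Phi K S) x z \<longleftrightarrow> (\<exists>u w g. u \<in> Phi_vertices K S \<and> w \<in> Phi_vertices K S \<and> fst u < fst w
        \<and> g \<in> snd u \<and> g \<in> snd w \<and> {u,w} = {x,z})"
  unfolding adj_def Phi_def by auto

lemma PV_iff: "(i,C) \<in> Phi_vertices K S \<longleftrightarrow> i < length S \<and> C \<in> rcosets\<^bsub>K\<^esub> (generate K {S!i})"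
  by (simp add: Phi_vertices_def)

lemma Phi_wf: "\<forall>e\<in>fst (snd (Phi K S)). snd (snd (Phi K S)) e \<subseteq> fst (Phi K S)"
  by (auto simp: Phi_def)

context group
begin

lemma rcos_of_elem:
  assumes "subgroup U G" "C \<in> rcosets U" "g \<in> C"
  shows "C = U #> g"
proof -
  obtain x where "x \<in> carrier G" "C = U #> x" using assms by (auto simp: RCOSETS_def)
  then show ?thesis using repr_independence[of g U x] assms by simp
qed

lemma rcos_carrier:
  assumes "subgroup U G" "C \<in> rcosets U" "g \<in> C"
  shows "g \<in> carrier G"
  using assms subgroup.rcosets_carrier is_group by blast

lemma rcos_eq_mem:
  assumes "subgroup U G" "x \<in> carrier G" "y \<in> carrier G"
  shows "U #> x = U #> y \<longleftrightarrow> y \<in> U #> x"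
  using assms repr_independence repr_independenceD by metis

end

lemma adj_Phi_vv:
  assumes "group K" "set S \<subseteq> carrier K" "adj (Phi K S) (i,C) (j,D)"
  shows "i \<noteq> j \<and> i < length S \<and> j < length S \<and> C \<in> rcosets\<^bsub>K\<^esub> (generate K {S!i})
      \<and> D \<in> rcosets\<^bsub>K\<^esub> (generate K {S!j}) \<and> (\<exists>g. g \<in> C \<and> g \<in> D)"
  using assms(3) unfolding adj_Phi by (auto simp: doubleton_eq_iff PV_iff)

lemma adj_Phi_intro:
  fixes K :: "('k,'m) monoid_scheme" (structure)
  assumes grp: "group K" and S: "set S \<subseteq> carrier K"
    and i: "i < length S" and j: "j < length S" and ij: "i \<noteq> j"
    and g: "g \<in> carrier K"
  shows "adj (Phi K S) (i, generate K {S!i} #>\<^bsub>K\<^esub> g) (j, generate K {S!j} #>\<^bsub>K\<^esub> g)"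
proof -
  interpret group K by fact
  have si: "subgroup (generate K {S!i}) K" using generate_is_subgroup S i nth_mem by (metis empty_subsetI insert_subset subset_code(1))
  have sj: "subgroup (generate K {S!j}) K" using generate_is_subgroup S j nth_mem by (metis empty_subsetI insert_subset subset_code(1))
  have u: "(i, generate K {S!i} #> g) \<in> Phi_vertices K S"
    using i si g by (auto simp: PV_iff intro!: rcosetsI subgroup.subset)
  have w: "(j, generate K {S!j} #> g) \<in> Phi_vertices K S"
    using j sj g by (auto simp: PV_iff intro!: rcosetsI subgroup.subset)
  have gi: "g \<in> generate K {S!i} #> g" using rcos_self si g by blast
  have gj: "g \<in> generate K {S!j} #> g" using rcos_self sj g by blast
  show ?thesis unfolding adj_Phi
  proof (cases "i < j")
    case True
    then show "\<exists>u w ga. u \<in> Phi_vertices K S \<and> w \<in> Phi_vertices K S \<and> fst u < fst w \<and>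
      ga \<in> snd u \<and> ga \<in> snd w \<and> {u, w} = {(i, generate K {S ! i} #> g), (j, generate K {S ! j} #> g)}"
      using u w gi gj by (intro exI[of _ "(i, generate K {S!i} #> g)"] exI[of _ "(j, generate K {S!j} #> g)"] exI[of _ g]) auto
  next
    case False
    then show "\<exists>u w ga. u \<in> Phi_vertices K S \<and> w \<in> Phi_vertices K S \<and> fst u < fst w \<and>
      ga \<in> snd u \<and> ga \<in> snd w \<and> {u, w} = {(i, generate K {S ! i} #> g), (j, generate K {S ! j} #> g)}"
      using u w gi gj ij by (intro exI[of _ "(j, generate K {S!j} #> g)"] exI[of _ "(i, generate K {S!i} #> g)"] exI[of _ g]) auto
  qed
qed

definition rho :: "('k,'m) monoid_scheme \<Rightarrow> 'k \<Rightarrow> nat \<times> 'k set \<Rightarrow> nat \<times> 'k set" where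
  "rho K k v = (fst v, snd v #>\<^bsub>K\<^esub> k)"

lemma rho_props:
  fixes K :: "('k,'m) monoid_scheme" (structure)
  assumes grp: "group K" and S: "set S \<subseteq> carrier K" and k: "k \<in> carrier K"
    and kk: "k \<otimes>\<^bsub>K\<^esub> k = \<one>\<^bsub>K\<^esub>"
  shows "\<And>v. v \<in> Phi_vertices K S \<Longrightarrow> rho K k v \<in> Phi_vertices K S"
    and "\<And>v. v \<in> Phi_vertices K S \<Longrightarrow> rho K k (rho K k v) = v"
    and "\<And>x z. adj (Phi K S) x z \<Longrightarrow> adj (Phi K S) (rho K k x) (rho K k z)"
proof -
  interpret group K by fact
  have sub: "subgroup (generate K {S!i}) K" if "i < length S" for i
    using generate_is_subgroup S that nth_mem by (metis empty_subsetI insert_subset subset_code(1))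
  show 1: "rho K k v \<in> Phi_vertices K S" if hv: "v \<in> Phi_vertices K S" for v
  proof -
    obtain i C where v: "v = (i,C)" "i < length S" "C \<in> rcosets (generate K {S!i})"
      using hv by (cases v) (auto simp: PV_iff)
    then obtain x where x: "x \<in> carrier K" "C = generate K {S!i} #> x" by (auto simp: RCOSETS_def)
    have "C #> k = generate K {S!i} #> (x \<otimes> k)"
      using x coset_mult_assoc sub[OF v(2)] k subgroup.subset by blast
    then show ?thesis using v x k sub[OF v(2)] by (auto simp: rho_def PV_iff intro!: rcosetsI subgroup.subset)
  qed
  show "rho K k (rho K k v) = v" if hv: "v \<in> Phi_vertices K S" for v
  proof -
    obtain i C where v: "v = (i,C)" "i < length S" "C \<in> rcosets (generate K {S!i})"
      using hv by (cases v) (auto simp: PV_iff)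
    have Cs: "C \<subseteq> carrier K" using subgroup.rcosets_carrier[OF sub[OF v(2)] grp v(3)] .
    have "(C #> k) #> k = C" using coset_mult_assoc[OF Cs k k] kk Cs by simp
    then show ?thesis using v by (simp add: rho_def)
  qed
  show "adj (Phi K S) (rho K k x) (rho K k z)" if hxz: "adj (Phi K S) x z" for x z
  proof -
    obtain u w g where uw: "u \<in> Phi_vertices K S" "w \<in> Phi_vertices K S" "fst u < fst w"
        "g \<in> snd u" "g \<in> snd w" "{u,w} = {x,z}"
      using hxz unfolding adj_Phi by blast
    have "g \<otimes> k \<in> snd u #> k" "g \<otimes> k \<in> snd w #> k" using uw(4,5) by (auto simp: r_coset_def)
    then show ?thesis unfolding adj_Phi using 1[OF uw(1)] 1[OF uw(2)] uw(3,6)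
      by (intro exI[of _ "rho K k u"] exI[of _ "rho K k w"] exI[of _ "g \<otimes> k"])
         (auto simp: rho_def doubleton_eq_iff)
  qed
qed



lemma phi_struct:
  fixes K :: "('k,'m) monoid_scheme" (structure)
  assumes grp: "group K" and S: "set S \<subseteq> carrier K" and v0: "v0 \<in> Phi_vertices K S"
    and nb: "\<And>z. adj (Phi K S) v0 z \<longleftrightarrow> z = p \<or> z = q"
    and pq: "p \<noteq> q" and npq: "\<not> adj (Phi K S) p q"
    and simple: "inj_on (snd (snd (Phi K S))) (fst (snd (Phi K S)))"
  shows "\<exists>k\<in>carrier K. k \<otimes> k = \<one> \<and> rho K k v0 = v0 \<and> rho K k p = q"
proof -
  interpret group K by fact
  define U where "U j = generate K {S!j}" for j
  have sU: "subgroup (U j) K" if "j < length S" for j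
    using generate_is_subgroup S that nth_mem unfolding U_def by (metis empty_subsetI insert_subset subset_code(1))
  have Sc: "S!j \<in> carrier K" if "j < length S" for j using S that nth_mem by blast
  obtain i C where v0': "v0 = (i,C)" "i < length S" "C \<in> rcosets (U i)"
    using v0 by (cases v0) (auto simp: PV_iff U_def)
  obtain y where y: "y \<in> carrier K" "C = U i #> y" using v0'(3) by (auto simp: RCOSETS_def)
  have yC: "y \<in> C" using y rcos_self sU v0'(2) by blast
  have Ccar: "g \<in> carrier K" if "g \<in> C" for g using rcos_carrier[OF sU[OF v0'(2)] v0'(3) that] .
  have nbform: "\<exists>j g. j < length S \<and> j \<noteq> i \<and> g \<in> C \<and> z = (j, U j #> g)" if "adj (Phi K S) v0 z" for z
  proof -
    obtain j D where z: "z = (j,D)" by (cases z)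
    have h: "i \<noteq> j \<and> i < length S \<and> j < length S \<and> C \<in> rcosets (U i) \<and> D \<in> rcosets (U j) \<and> (\<exists>g. g \<in> C \<and> g \<in> D)"
      using adj_Phi_vv[OF grp S, of i C j D] that v0' z by (simp add: U_def)
    then obtain g where g: "g \<in> C" "g \<in> D" by blast
    have "D = U j #> g" using rcos_of_elem[OF sU[of j] _ g(2)] h by blast
    then show ?thesis using h g z by blast
  qed
  have nbintro: "adj (Phi K S) v0 (j, U j #> g)" if "j < length S" "j \<noteq> i" "g \<in> C" for j g
  proof -
    have "C = U i #> g" using rcos_of_elem[OF sU[OF v0'(2)] v0'(3) that(3)] .
    then show ?thesis using adj_Phi_intro[OF grp S v0'(2) that(1) _ Ccar[OF that(3)]] that v0'(1)
      by (simp add: U_def)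
  qed
  obtain j g1 where p: "j < length S" "j \<noteq> i" "g1 \<in> C" "p = (j, U j #> g1)"
    using nbform nb by blast
  obtain j' g2 where q: "j' < length S" "j' \<noteq> i" "g2 \<in> C" "q = (j', U j' #> g2)"
    using nbform nb by blast
  have jj: "j' = j"
  proof (rule ccontr)
    assume ne: "j' \<noteq> j"
    have "(j, U j #> y) = p" using nb nbintro[OF p(1,2) yC] p(4) ne q(4) by auto
    moreover have "(j', U j' #> y) = q" using nb nbintro[OF q(1,2) yC] p(4) ne q(4) by auto
    moreover have "adj (Phi K S) (j, U j #> y) (j', U j' #> y)"
      using adj_Phi_intro[OF grp S p(1) q(1) ne[symmetric] y(1)] by (simp add: U_def)
    ultimately show False using npq by simp
  qed
  have inj: "g = g'" if "g \<in> C" "g' \<in> C" "U j #> g = U j #> g'" for g g'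
  proof -
    define ed where "ed h = (if i < j then (v0, (j, U j #> h), h) else ((j, U j #> h), v0, h))" for h
    have vj: "(j, U j #> h) \<in> Phi_vertices K S" if "h \<in> C" for h
      using p(1) Ccar[OF that] sU[OF p(1)] by (auto simp: PV_iff U_def intro!: rcosetsI subgroup.subset)
    have hU: "h \<in> U j #> h" if "h \<in> C" for h using rcos_self Ccar[OF that] sU[OF p(1)] by blast
    have inE: "ed h \<in> fst (snd (Phi K S))" if "h \<in> C" for h
      using vj[OF that] hU[OF that] that v0 v0'(1) p(2) by (auto simp: ed_def Phi_def)
    have "snd (snd (Phi K S)) (ed g) = snd (snd (Phi K S)) (ed g')"
      using that(3) by (auto simp: ed_def Phi_def insert_commute)
    then have "ed g = ed g'" using simple inE that(1,2) by (auto dest: inj_onD)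
    then show ?thesis by (auto simp: ed_def split: if_splits)
  qed
  define b where "b = S!i"
  have b: "b \<in> carrier K" using Sc v0'(2) b_def by simp
  have bU: "b \<in> U i" unfolding U_def b_def by (rule generate.incl) simp
  have b1: "b \<noteq> \<one>"
  proof
    assume "b = \<one>"
    then have "U i = {\<one>}" unfolding U_def b_def[symmetric] by (simp add: generate_one)
    then have "C = {y}" using y by (simp add: r_coset_def)
    then show False using p q jj pq by simp
  qed
  define k where "k = inv y \<otimes> b \<otimes> y"
  have k: "k \<in> carrier K" using b y by (simp add: k_def)
  have yk: "y \<otimes> k = b \<otimes> y" using b y by (simp add: k_def m_assoc[symmetric])
  have k1: "k \<noteq> \<one>"
  proof
    assume "k = \<one>"
    then have "b \<otimes> y = y" using yk y by simp
    then show False using b1 b y by (metis l_one r_cancel one_closed)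
  qed
  have Ck: "C #> k = C"
  proof -
    have "C #> k = U i #> (y \<otimes> k)" using y k coset_mult_assoc sU[OF v0'(2)] subgroup.subset by blast
    also have "\<dots> = U i #> (b \<otimes> y)" by (simp add: yk)
    also have "\<dots> = U i #> y"
      using repr_independence[of "b \<otimes> y" "U i" y] rcosI[OF bU _ y(1)] sU[OF v0'(2)] subgroup.subset y(1)
      by metis
    finally show ?thesis using y by simp
  qed
  have gkC: "g \<otimes> k \<in> C" if "g \<in> C" for g
  proof -
    have "g \<otimes> k \<in> C #> k" using that by (auto simp: r_coset_def)
    then show ?thesis using Ck by simp
  qed
  have rj: "rho K k (j, U j #> g) = (j, U j #> (g \<otimes> k))" if "g \<in> C" for g
    using coset_mult_assoc[of "U j" g k] Ccar[OF that] k subgroup.subset[OF sU[OF p(1)]]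
    by (simp add: rho_def)
  have oth: "rho K k (j, U j #> g) \<in> {p,q} \<and> rho K k (j, U j #> g) \<noteq> (j, U j #> g)" if g: "g \<in> C" for g
  proof
    show "rho K k (j, U j #> g) \<in> {p,q}" using nb nbintro[OF p(1,2) gkC[OF g]] rj[OF g] by simp
    show "rho K k (j, U j #> g) \<noteq> (j, U j #> g)"
    proof
      assume "rho K k (j, U j #> g) = (j, U j #> g)"
      then have "g \<otimes> k = g" using inj[OF gkC[OF g] g] rj[OF g] by simp
      then have "g \<otimes> k = g \<otimes> \<one>" using Ccar[OF g] by simp
      then show False using k1 k Ccar[OF g] by (metis l_cancel one_closed)
    qed
  qed
  have rp: "rho K k p = q" using oth[OF p(3)] p(4) by auto
  have "rho K k q = (j, U j #> (g1 \<otimes> k \<otimes> k))"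
    using rp rj[OF p(3)] rj[OF gkC[OF p(3)]] p(4) by simp
  moreover have "rho K k q = p" using oth[OF q(3)] q(4) jj pq by auto
  ultimately have "U j #> (g1 \<otimes> k \<otimes> k) = U j #> g1" using p(4) by simp
  then have "g1 \<otimes> k \<otimes> k = g1" using inj gkC p(3) by blast
  then have "g1 \<otimes> (k \<otimes> k) = g1 \<otimes> \<one>" using Ccar[OF p(3)] k by (simp add: m_assoc)
  then have kk: "k \<otimes> k = \<one>" using Ccar[OF p(3)] k by (metis l_cancel one_closed m_closed)
  have rv: "rho K k v0 = v0" using Ck v0'(1) by (simp add: rho_def)
  show ?thesis using k kk rv rp by blast
qed



locale ST = group G for G (structure) +
  fixes s t
  assumes s: "s \<in> carrier G" and t: "t \<in> carrier G"
begin

abbreviation "Hs \<equiv> generate G {s}"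
abbreviation "Ht \<equiv> generate G {t}"
abbreviation "HH \<equiv> generate G {s,t}"

definition Eg where "Eg g = ((0::nat, Hs #> g), (1::nat, Ht #> g), g)"

lemma sHs: "subgroup Hs G" using generate_is_subgroup s by simp
lemma sHt: "subgroup Ht G" using generate_is_subgroup t by simp
lemma sHH: "subgroup HH G" using generate_is_subgroup s t by simp
lemma Hs_HH: "Hs \<subseteq> HH" using mono_generate by simp
lemma Ht_HH: "Ht \<subseteq> HH" using mono_generate by simp

lemma Eg_inj: "Eg g = Eg g' \<Longrightarrow> g = g'" by (simp add: Eg_def)

lemma VG: "Phi_vertices G [s,t] = {(0, Hs #> g) | g. g \<in> carrier G} \<union> {(1, Ht #> g) | g. g \<in> carrier G}"
  by (auto simp: Phi_vertices_def less_Suc_eq RCOSETS_def)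

lemma EG: "fst (snd (Phi G [s,t])) = Eg ` carrier G"
proof
  show "fst (snd (Phi G [s,t])) \<subseteq> Eg ` carrier G"
  proof
    fix x assume "x \<in> fst (snd (Phi G [s,t]))"
    then obtain i C j D g where x: "x = ((i,C),(j,D),g)" "(i,C) \<in> Phi_vertices G [s,t]"
        "(j,D) \<in> Phi_vertices G [s,t]" "i < j" "g \<in> C" "g \<in> D" by (auto simp: Phi_def)
    then have ij: "i = 0" "j = 1" "C \<in> rcosets Hs" "D \<in> rcosets Ht" by (auto simp: PV2)
    have C: "C = Hs #> g" using rcos_of_elem[OF sHs ij(3) x(5)] .
    have D: "D = Ht #> g" using rcos_of_elem[OF sHt ij(4) x(6)] .
    have "g \<in> carrier G" using rcos_carrier[OF sHs ij(3) x(5)] .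
    then show "x \<in> Eg ` carrier G" using x ij C D by (auto simp: Eg_def)
  qed
  show "Eg ` carrier G \<subseteq> fst (snd (Phi G [s,t]))"
    using sHs sHt by (auto simp: Eg_def Phi_def PV2 intro!: rcosetsI subgroup.subset rcos_self)
qed

lemma psiG: "snd (snd (Phi G [s,t])) (Eg g) = {(0, Hs #> g), (1, Ht #> g)}"
  by (simp add: Phi_def Eg_def)

definition VI where "VI = fst (Phi G [s,t]) <+> fst (snd (Phi G [s,t]))"
definition EI where "EI = {(v, a). a \<in> fst (snd (Phi G [s,t])) \<and> v \<in> snd (snd (Phi G [s,t])) a}"
definition psiI :: "(nat \<times> 'a set) \<times> ((nat \<times> 'a set) \<times> (nat \<times> 'a set) \<times> 'a) \<Rightarrow> _" where
  "psiI = (\<lambda>(v, a). {Inl v, Inr a})"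

lemma incid: "incidence (Phi G [s,t]) = (VI, EI, psiI)"
  unfolding VI_def EI_def psiI_def incidence_def by (cases "Phi G [s,t]") simp

lemma VI_eq: "VI = Phi_vertices G [s,t] <+> Eg ` carrier G"
  unfolding VI_def using EG by (simp add: Phi_def)

lemma EI_iff: "(v, a) \<in> EI \<longleftrightarrow> (\<exists>g\<in>carrier G. a = Eg g \<and> (v = (0, Hs #> g) \<or> v = (1, Ht #> g)))"
proof
  assume "(v, a) \<in> EI"
  then have "a \<in> Eg ` carrier G" "v \<in> snd (snd (Phi G [s,t])) a" unfolding EI_def EG by auto
  then show "\<exists>g\<in>carrier G. a = Eg g \<and> (v = (0, Hs #> g) \<or> v = (1, Ht #> g))" using psiG by blast
next
  assume "\<exists>g\<in>carrier G. a = Eg g \<and> (v = (0, Hs #> g) \<or> v = (1, Ht #> g))"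
  then show "(v, a) \<in> EI" unfolding EI_def EG using psiG by auto
qed

lemma adjI_def': "adj (VI,EI,psiI) x z \<longleftrightarrow>
   (\<exists>g\<in>carrier G. \<exists>v. (v = (0, Hs #> g) \<or> v = (1, Ht #> g)) \<and> {Inl v, Inr (Eg g)} = {x,z})"
proof
  assume "adj (VI,EI,psiI) x z"
  then obtain v a where "(v, a) \<in> EI" "{Inl v, Inr a} = {x,z}" unfolding adj_def psiI_def by auto
  then show "\<exists>g\<in>carrier G. \<exists>v. (v = (0, Hs #> g) \<or> v = (1, Ht #> g)) \<and> {Inl v, Inr (Eg g)} = {x,z}"
    unfolding EI_iff by blast
next
  assume "\<exists>g\<in>carrier G. \<exists>v. (v = (0, Hs #> g) \<or> v = (1, Ht #> g)) \<and> {Inl v, Inr (Eg g)} = {x,z}"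
  then obtain g v where "g \<in> carrier G" "v = (0, Hs #> g) \<or> v = (1, Ht #> g)" "{Inl v, Inr (Eg g)} = {x,z}" by blast
  then have "(v, Eg g) \<in> EI" "psiI (v, Eg g) = {x,z}" unfolding EI_iff psiI_def by auto
  then show "adj (VI,EI,psiI) x z" unfolding adj_def by auto
qed

lemma A1: "g \<in> carrier G \<Longrightarrow> adj (VI,EI,psiI) (Inr (Eg g)) z \<longleftrightarrow> z = Inl (0, Hs #> g) \<or> z = Inl (1, Ht #> g)"
  unfolding adjI_def' by (auto simp: doubleton_eq_iff Eg_def)

lemma A2: "adj (VI,EI,psiI) (Inl v) z \<Longrightarrow> \<exists>g\<in>carrier G. z = Inr (Eg g) \<and> (v = (0, Hs #> g) \<or> v = (1, Ht #> g))"
  unfolding adjI_def' by (auto simp: doubleton_eq_iff)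

lemma A4: "\<not> adj (VI,EI,psiI) (Inl v) (Inl w)"
  unfolding adjI_def' by (auto simp: doubleton_eq_iff)

lemma wfI: "\<forall>e\<in>EI. psiI e \<subseteq> VI"
  unfolding EI_def psiI_def VI_def by (auto simp: Phi_def)

lemma simpleI: "inj_on psiI EI"
  unfolding psiI_def by (auto simp: inj_on_def doubleton_eq_iff)

lemma Inl0: "g \<in> carrier G \<Longrightarrow> Inl (0, Hs #> g) \<in> VI"
  unfolding VI_eq VG by auto
lemma Inl1: "g \<in> carrier G \<Longrightarrow> Inl (1, Ht #> g) \<in> VI"
  unfolding VI_eq VG by auto
lemma InrE: "g \<in> carrier G \<Longrightarrow> Inr (Eg g) \<in> VI"
  unfolding VI_eq by auto

lemma left_induct:
  assumes Q1: "Q \<one>"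
    and step: "\<And>g c. g \<in> carrier G \<Longrightarrow> c \<in> {s, t, inv s, inv t} \<Longrightarrow> Q g \<Longrightarrow> Q (c \<otimes> g)"
    and x: "x \<in> HH"
  shows "Q x"
proof -
  define R where "R = {x \<in> carrier G. \<forall>y\<in>carrier G. Q y \<longleftrightarrow> Q (x \<otimes> y)}"
  have gen: "c \<in> R" if c: "c \<in> {s, t, inv s, inv t}" for c
  proof -
    have cc: "c \<in> carrier G" using c s t by auto
    have ic: "inv c \<in> {s, t, inv s, inv t}" using c s t by auto
    have "Q y \<longleftrightarrow> Q (c \<otimes> y)" if y: "y \<in> carrier G" for y
    proof
      show "Q y \<Longrightarrow> Q (c \<otimes> y)" using step[OF y c] by simp
      assume "Q (c \<otimes> y)"
      then have "Q (inv c \<otimes> (c \<otimes> y))" using step[OF _ ic] cc y by simp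
      then show "Q y" using cc y by (simp add: m_assoc[symmetric])
    qed
    then show ?thesis using cc by (simp add: R_def)
  qed
  have sR: "subgroup R G"
  proof (rule subgroupI)
    show "R \<subseteq> carrier G" by (auto simp: R_def)
    show "R \<noteq> {}" by (auto simp: R_def intro!: exI[of _ \<one>])
    show "inv a \<in> R" if "a \<in> R" for a
    proof -
      have a: "a \<in> carrier G" "\<forall>y\<in>carrier G. Q y \<longleftrightarrow> Q (a \<otimes> y)" using that by (auto simp: R_def)
      have hh: "Q y \<longleftrightarrow> Q (inv a \<otimes> y)" if y: "y \<in> carrier G" for y
      proof -
        have e: "a \<otimes> (inv a \<otimes> y) = y" using a(1) y by (simp add: m_assoc[symmetric])
        have c: "inv a \<otimes> y \<in> carrier G" using a(1) y by simp
        have "Q (inv a \<otimes> y) \<longleftrightarrow> Q (a \<otimes> (inv a \<otimes> y))" using a(2) c by blast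
        then show ?thesis using e by simp
      qed
      show ?thesis unfolding R_def using a(1) hh by blast
    qed
    show "a \<otimes> b \<in> R" if "a \<in> R" "b \<in> R" for a b
    proof -
      have a: "a \<in> carrier G" "\<forall>y\<in>carrier G. Q y \<longleftrightarrow> Q (a \<otimes> y)" using that by (auto simp: R_def)
      have b: "b \<in> carrier G" "\<forall>y\<in>carrier G. Q y \<longleftrightarrow> Q (b \<otimes> y)" using that by (auto simp: R_def)
      have hh: "Q y \<longleftrightarrow> Q (a \<otimes> b \<otimes> y)" if y: "y \<in> carrier G" for y
      proof -
        have c: "b \<otimes> y \<in> carrier G" using b(1) y by simp
        have "Q y \<longleftrightarrow> Q (b \<otimes> y)" using b(2) y by blast
        also have "\<dots> \<longleftrightarrow> Q (a \<otimes> (b \<otimes> y))" using a(2) c by blast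
        finally show ?thesis using a(1) b(1) y by (simp add: m_assoc)
      qed
      show ?thesis unfolding R_def using a(1) b(1) hh by blast
    qed
  qed
  have "HH \<subseteq> R" using generate_subgroup_incl[OF _ sR] gen by auto
  then have "\<forall>y\<in>carrier G. Q y \<longleftrightarrow> Q (x \<otimes> y)" using x by (auto simp: R_def)
  moreover have xc: "x \<in> carrier G" using x generate_in_carrier[of "{s,t}"] s t by blast
  ultimately show ?thesis using Q1 by (metis one_closed r_one)
qed

end


context ST
begin

lemma coset_left:
  assumes U: "subgroup U G" and c: "c \<in> U" and g: "g \<in> carrier G"
  shows "U #> (c \<otimes> g) = U #> g"
proof -
  have "c \<otimes> g \<in> U #> g" using rcosI[OF c subgroup.subset[OF U] g] .
  then show ?thesis using repr_independence[OF _ g U] by simp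
qed

lemma partA_core:
  fixes \<phi>
  assumes phiV: "\<And>x. x \<in> VI \<Longrightarrow> \<phi> x \<in> VI"
    and phi2: "\<And>x. x \<in> VI \<Longrightarrow> \<phi> (\<phi> x) = x"
    and phiadj: "\<And>x z. adj (VI,EI,psiI) x z \<Longrightarrow> adj (VI,EI,psiI) (\<phi> x) (\<phi> z)"
    and phi0: "\<phi> (Inr (Eg \<one>)) = Inr (Eg \<one>)"
    and phis: "\<phi> (Inl (0, Hs)) = Inl (1, Ht)"
  shows "\<exists>f. f \<in> HH \<rightarrow> HH \<and> (\<forall>x\<in>HH. f (f x) = x) \<and> f \<one> = \<one>
         \<and> (\<forall>x\<in>HH. \<exists>(m::int) (n::int). f (s \<otimes> x) = t [^] m \<otimes> f x \<and> f (t \<otimes> x) = s [^] n \<otimes> f x)"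
proof -
  define ff where "ff g = (case \<phi> (Inr (Eg g)) of Inr e \<Rightarrow> snd (snd e) | Inl _ \<Rightarrow> \<one>)" for g
  define P where "P g \<longleftrightarrow> ff g \<in> HH \<and> \<phi> (Inr (Eg g)) = Inr (Eg (ff g))
      \<and> \<phi> (Inl (0, Hs #> g)) = Inl (1, Ht #> ff g) \<and> \<phi> (Inl (1, Ht #> g)) = Inl (0, Hs #> ff g)" for g
  have ffE: "ff g = h" if "\<phi> (Inr (Eg g)) = Inr (Eg h)" for g h
    using that by (simp add: ff_def Eg_def)
  have HHc: "HH \<subseteq> carrier G" using subgroup.subset[OF sHH] .
  have Hsc: "Hs \<subseteq> carrier G" using subgroup.subset[OF sHs] .
  have Htc: "Ht \<subseteq> carrier G" using subgroup.subset[OF sHt] .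
  have P1: "P \<one>"
  proof -
    have f1: "ff \<one> = \<one>" using ffE phi0 by blast
    have a: "\<phi> (Inl (0, Hs #> \<one>)) = Inl (1, Ht #> ff \<one>)" using phis f1 Hsc Htc by simp
    have "\<phi> (Inl (1, Ht #> \<one>)) = \<phi> (\<phi> (Inl (0, Hs #> \<one>)))" using phis Hsc Htc by simp
    also have "\<dots> = Inl (0, Hs #> ff \<one>)" using phi2[OF Inl0[OF one_closed]] f1 by simp
    finally show ?thesis unfolding P_def using f1 a phi0 generate.one by auto
  qed
  have stepS: "P g'" if g: "g \<in> carrier G" and g': "g' \<in> carrier G" and eq: "Hs #> g' = Hs #> g" and Pg: "P g" for g g'
  proof -
    have Pg': "ff g \<in> HH" "\<phi> (Inl (0, Hs #> g)) = Inl (1, Ht #> ff g)" using Pg by (auto simp: P_def)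
    have ffc: "ff g \<in> carrier G" using Pg'(1) HHc by auto
    have "adj (VI,EI,psiI) (Inr (Eg g')) (Inl (0, Hs #> g'))" using A1 g' by simp
    then have "adj (VI,EI,psiI) (\<phi> (Inl (0, Hs #> g))) (\<phi> (Inr (Eg g')))" using phiadj adj_sym eq by metis
    then obtain h where h: "h \<in> carrier G" "\<phi> (Inr (Eg g')) = Inr (Eg h)"
      "(1::nat, Ht #> ff g) = (0, Hs #> h) \<or> (1::nat, Ht #> ff g) = (1, Ht #> h)"
      using A2 Pg'(2) by metis
    have hh: "Ht #> ff g = Ht #> h" using h(3) by auto
    have fg': "ff g' = h" using ffE h(2) .
    have hH: "h \<in> HH"
    proof -
      have "h \<in> Ht #> ff g" using hh rcos_self[OF h(1) sHt] by simp
      then obtain k where "k \<in> Ht" "h = k \<otimes> ff g" by (auto simp: r_coset_def)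
      then show ?thesis using Ht_HH Pg'(1) subgroup.m_closed[OF sHH] by auto
    qed
    have a1: "\<phi> (Inl (0, Hs #> g')) = Inl (1, Ht #> ff g')" using eq Pg'(2) hh fg' by simp
    have "adj (VI,EI,psiI) (Inr (Eg g')) (Inl (1, Ht #> g'))" using A1 g' by simp
    then have "adj (VI,EI,psiI) (Inr (Eg h)) (\<phi> (Inl (1, Ht #> g')))" using phiadj h(2) by metis
    then have or: "\<phi> (Inl (1, Ht #> g')) = Inl (0, Hs #> h) \<or> \<phi> (Inl (1, Ht #> g')) = Inl (1, Ht #> h)"
      using A1 h(1) by simp
    have "\<phi> (Inl (1, Ht #> g')) \<noteq> Inl (1, Ht #> h)"
    proof
      assume "\<phi> (Inl (1, Ht #> g')) = Inl (1, Ht #> h)"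
      then have "\<phi> (Inl (1, Ht #> g')) = \<phi> (Inl (0, Hs #> g'))" using a1 fg' by simp
      then have "\<phi> (\<phi> (Inl (1, Ht #> g'))) = \<phi> (\<phi> (Inl (0, Hs #> g')))" by simp
      then show False using phi2[OF Inl1[OF g']] phi2[OF Inl0[OF g']] by simp
    qed
    then have a2: "\<phi> (Inl (1, Ht #> g')) = Inl (0, Hs #> ff g')" using or fg' by simp
    show ?thesis unfolding P_def using hH fg' h(2) a1 a2 by simp
  qed
  have stepT: "P g'" if g: "g \<in> carrier G" and g': "g' \<in> carrier G" and eq: "Ht #> g' = Ht #> g" and Pg: "P g" for g g'
  proof -
    have Pg': "ff g \<in> HH" "\<phi> (Inl (1, Ht #> g)) = Inl (0, Hs #> ff g)" using Pg by (auto simp: P_def)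
    have "adj (VI,EI,psiI) (Inr (Eg g')) (Inl (1, Ht #> g'))" using A1 g' by simp
    then have "adj (VI,EI,psiI) (\<phi> (Inl (1, Ht #> g))) (\<phi> (Inr (Eg g')))" using phiadj adj_sym eq by metis
    then obtain h where h: "h \<in> carrier G" "\<phi> (Inr (Eg g')) = Inr (Eg h)"
      "(0::nat, Hs #> ff g) = (0, Hs #> h) \<or> (0::nat, Hs #> ff g) = (1, Ht #> h)"
      using A2 Pg'(2) by metis
    have hh: "Hs #> ff g = Hs #> h" using h(3) by auto
    have fg': "ff g' = h" using ffE h(2) .
    have hH: "h \<in> HH"
    proof -
      have "h \<in> Hs #> ff g" using hh rcos_self[OF h(1) sHs] by simp
      then obtain k where "k \<in> Hs" "h = k \<otimes> ff g" by (auto simp: r_coset_def)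
      then show ?thesis using Hs_HH Pg'(1) subgroup.m_closed[OF sHH] by auto
    qed
    have a1: "\<phi> (Inl (1, Ht #> g')) = Inl (0, Hs #> ff g')" using eq Pg'(2) hh fg' by simp
    have "adj (VI,EI,psiI) (Inr (Eg g')) (Inl (0, Hs #> g'))" using A1 g' by simp
    then have "adj (VI,EI,psiI) (Inr (Eg h)) (\<phi> (Inl (0, Hs #> g')))" using phiadj h(2) by metis
    then have or: "\<phi> (Inl (0, Hs #> g')) = Inl (0, Hs #> h) \<or> \<phi> (Inl (0, Hs #> g')) = Inl (1, Ht #> h)"
      using A1 h(1) by simp
    have "\<phi> (Inl (0, Hs #> g')) \<noteq> Inl (0, Hs #> h)"
    proof
      assume "\<phi> (Inl (0, Hs #> g')) = Inl (0, Hs #> h)"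
      then have "\<phi> (Inl (0, Hs #> g')) = \<phi> (Inl (1, Ht #> g'))" using a1 fg' by simp
      then have "\<phi> (\<phi> (Inl (0, Hs #> g'))) = \<phi> (\<phi> (Inl (1, Ht #> g')))" by simp
      then show False using phi2[OF Inl1[OF g']] phi2[OF Inl0[OF g']] by simp
    qed
    then have a2: "\<phi> (Inl (0, Hs #> g')) = Inl (1, Ht #> ff g')" using or fg' by simp
    show ?thesis unfolding P_def using hH fg' h(2) a1 a2 by simp
  qed
  have allP: "P x" if "x \<in> HH" for x
  proof (rule left_induct[where Q=P, OF P1 _ that])
    fix g c assume g: "g \<in> carrier G" and c: "c \<in> {s, t, inv s, inv t}" and Pg: "P g"
    have gen: "s \<in> Hs" "inv s \<in> Hs" "t \<in> Ht" "inv t \<in> Ht"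
      using generate.incl[of s "{s}" G] generate.inv[of s "{s}" G]
        generate.incl[of t "{t}" G] generate.inv[of t "{t}" G] by auto
    show "P (c \<otimes> g)"
    proof (cases "c = s \<or> c = inv s")
      case True
      then have "Hs #> (c \<otimes> g) = Hs #> g" using coset_left[OF sHs _ g] gen by auto
      then show ?thesis using stepS[OF g _ _ Pg] c g s t by auto
    next
      case False
      then have "c = t \<or> c = inv t" using c by auto
      then have "Ht #> (c \<otimes> g) = Ht #> g" using coset_left[OF sHt _ g] gen by auto
      then show ?thesis using stepT[OF g _ _ Pg] c g s t by auto
    qed
  qed
  have HHcl: "c \<otimes> x \<in> HH" if "c \<in> {s,t}" "x \<in> HH" for c x
    using that generate.incl[of c "{s,t}" G] subgroup.m_closed[OF sHH] by auto
  show ?thesis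
  proof (intro exI[of _ ff] conjI ballI)
    show "ff \<in> HH \<rightarrow> HH" using allP by (auto simp: P_def)
    show "ff (ff x) = x" if x: "x \<in> HH" for x
    proof -
      have xc: "x \<in> carrier G" using x HHc by auto
      have "\<phi> (\<phi> (Inr (Eg x))) = Inr (Eg x)" using phi2[OF InrE[OF xc]] .
      moreover have "\<phi> (Inr (Eg x)) = Inr (Eg (ff x))" using allP[OF x] by (simp add: P_def)
      moreover have "\<phi> (Inr (Eg (ff x))) = Inr (Eg (ff (ff x)))" using allP[of "ff x"] allP[OF x] by (simp add: P_def)
      ultimately show ?thesis using Eg_inj by simp
    qed
    show "ff \<one> = \<one>" using ffE phi0 by blast
    show "\<exists>(m::int) (n::int). ff (s \<otimes> x) = t [^] m \<otimes> ff x \<and> ff (t \<otimes> x) = s [^] n \<otimes> ff x" if x: "x \<in> HH" for x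
    proof -
      have xc: "x \<in> carrier G" using x HHc by auto
      have gen: "s \<in> Hs" "t \<in> Ht"
        using generate.incl[of s "{s}" G] generate.incl[of t "{t}" G] by auto
      have Px: "P x" and Psx: "P (s \<otimes> x)" and Ptx: "P (t \<otimes> x)" using allP x HHcl by auto
      have e1: "Hs #> (s \<otimes> x) = Hs #> x" using coset_left[OF sHs gen(1) xc] .
      have e2: "Ht #> (t \<otimes> x) = Ht #> x" using coset_left[OF sHt gen(2) xc] .
      have "Ht #> ff (s \<otimes> x) = Ht #> ff x" using Px Psx e1 by (simp add: P_def)
      moreover have "ff (s \<otimes> x) \<in> carrier G" "ff x \<in> carrier G" using Px Psx HHc by (auto simp: P_def)
      ultimately have "ff (s \<otimes> x) \<in> Ht #> ff x" using rcos_self[OF _ sHt] by metis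
      then obtain k where k: "k \<in> Ht" "ff (s \<otimes> x) = k \<otimes> ff x" by (auto simp: r_coset_def)
      then obtain m :: int where m: "k = t [^] m" using generate_pow[OF t] by auto
      have "Hs #> ff (t \<otimes> x) = Hs #> ff x" using Px Ptx e2 by (simp add: P_def)
      moreover have "ff (t \<otimes> x) \<in> carrier G" "ff x \<in> carrier G" using Px Ptx HHc by (auto simp: P_def)
      ultimately have "ff (t \<otimes> x) \<in> Hs #> ff x" using rcos_self[OF _ sHs] by metis
      then obtain k' where k': "k' \<in> Hs" "ff (t \<otimes> x) = k' \<otimes> ff x" by (auto simp: r_coset_def)
      then obtain n :: int where n: "k' = s [^] n" using generate_pow[OF s] by auto
      show ?thesis using k m k' n by blast
    qed
  qed
qed

end


lemma adj_Phi_mem: "adj (Phi K S) x z \<Longrightarrow> x \<in> Phi_vertices K S \<and> z \<in> Phi_vertices K S"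
  unfolding adj_Phi by (auto simp: doubleton_eq_iff)

context ST
begin

lemma adjI_mem: "adj (VI,EI,psiI) x z \<Longrightarrow> x \<in> VI \<and> z \<in> VI"
  using wfI unfolding adj_def by (auto simp: doubleton_eq_iff)

lemma partA:
  assumes "G_graph TYPE('k) (incidence (Phi G [s,t]))"
  shows "\<exists>f. f \<in> HH \<rightarrow> HH \<and> (\<forall>x\<in>HH. f (f x) = x) \<and> f \<one> = \<one>
         \<and> (\<forall>x\<in>HH. \<exists>(m::int) (n::int). f (s \<otimes> x) = t [^] m \<otimes> f x \<and> f (t \<otimes> x) = s [^] n \<otimes> f x)"
proof -
  obtain K :: "'k monoid" and S where grpK: "group K" and SK: "set S \<subseteq> carrier K"
    and iso: "mg_iso (VI,EI,psiI) (Phi K S)"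
    using assms unfolding G_graph_def incid by blast
  define Y where "Y = Phi K S"
  have Ytr: "Y = (fst Y, fst (snd Y), snd (snd Y))" by simp
  have fY: "fst Y = Phi_vertices K S" by (simp add: Y_def Phi_def)
  obtain \<alpha> where bij: "bij_betw \<alpha> VI (fst Y)"
    and aadj: "\<forall>p\<in>VI. \<forall>q\<in>VI. adj (VI,EI,psiI) p q \<longleftrightarrow> adj (fst Y, fst (snd Y), snd (snd Y)) (\<alpha> p) (\<alpha> q)"
    and simple: "inj_on (snd (snd Y)) (fst (snd Y))"
    using mg_iso_adj[of VI EI psiI "fst Y" "fst (snd Y)" "snd (snd Y)"] iso wfI simpleI Ytr
    unfolding Y_def by metis
  have aadj': "adj (VI,EI,psiI) p q \<longleftrightarrow> adj (Phi K S) (\<alpha> p) (\<alpha> q)" if "p \<in> VI" "q \<in> VI" for p q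
    using aadj that Ytr unfolding Y_def by metis
  have ainj: "inj_on \<alpha> VI" and aimg: "\<alpha> ` VI = Phi_vertices K S" using bij fY by (auto simp: bij_betw_def)
  define e0 where "e0 = Eg \<one>"
  have Hs1: "Hs #> \<one> = Hs" using subgroup.subset[OF sHs] by simp
  have Ht1: "Ht #> \<one> = Ht" using subgroup.subset[OF sHt] by simp
  have I0: "Inl (0, Hs) \<in> VI" using Inl0[OF one_closed] Hs1 by simp
  have I1: "Inl (1, Ht) \<in> VI" using Inl1[OF one_closed] Ht1 by simp
  have IE: "Inr e0 \<in> VI" using InrE[OF one_closed] e0_def by simp
  define v0 where "v0 = \<alpha> (Inr e0)"
  define p where "p = \<alpha> (Inl (0, Hs))"
  define q where "q = \<alpha> (Inl (1, Ht))"
  have v0V: "v0 \<in> Phi_vertices K S" using IE aimg v0_def by auto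
  have A1': "adj (VI,EI,psiI) (Inr e0) z \<longleftrightarrow> z = Inl (0, Hs) \<or> z = Inl (1, Ht)" for z
    using A1[OF one_closed] Hs1 Ht1 e0_def by simp
  have nb: "adj (Phi K S) v0 z \<longleftrightarrow> z = p \<or> z = q" for z
  proof
    assume "adj (Phi K S) v0 z"
    moreover from this have "z \<in> Phi_vertices K S" using adj_Phi_mem by blast
    then obtain z' where z': "z' \<in> VI" "z = \<alpha> z'" using aimg by auto
    ultimately have "adj (VI,EI,psiI) (Inr e0) z'" using aadj'[OF IE z'(1)] v0_def by simp
    then show "z = p \<or> z = q" using A1' z' p_def q_def by auto
  next
    assume "z = p \<or> z = q"
    then show "adj (Phi K S) v0 z" using aadj'[OF IE I0] aadj'[OF IE I1] A1' v0_def p_def q_def by auto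
  qed
  have pq: "p \<noteq> q" using inj_onD[OF ainj _ I0 I1] p_def q_def by auto
  have npq: "\<not> adj (Phi K S) p q" using aadj'[OF I0 I1] A4 p_def q_def by simp
  have simple': "inj_on (snd (snd (Phi K S))) (fst (snd (Phi K S)))" using simple Y_def by simp
  obtain k where k: "k \<in> carrier K" "k \<otimes>\<^bsub>K\<^esub> k = \<one>\<^bsub>K\<^esub>" "rho K k v0 = v0" "rho K k p = q"
    using phi_struct[OF grpK SK v0V nb pq npq simple'] by blast
  note rp = rho_props[OF grpK SK k(1,2)]
  define \<phi> where "\<phi> x = inv_into VI \<alpha> (rho K k (\<alpha> x))" for x
  have aV: "\<alpha> x \<in> Phi_vertices K S" if "x \<in> VI" for x using that aimg by auto
  have aphi: "\<alpha> (\<phi> x) = rho K k (\<alpha> x)" if "x \<in> VI" for x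
    unfolding \<phi>_def using rp(1)[OF aV[OF that]] aimg by (simp add: f_inv_into_f)
  have phiV: "\<phi> x \<in> VI" if "x \<in> VI" for x
    unfolding \<phi>_def using rp(1)[OF aV[OF that]] aimg by (metis inv_into_into)
  have phi2: "\<phi> (\<phi> x) = x" if "x \<in> VI" for x
  proof -
    have "\<phi> (\<phi> x) = inv_into VI \<alpha> (rho K k (rho K k (\<alpha> x)))" unfolding \<phi>_def[of "\<phi> x"] using aphi[OF that] by simp
    also have "\<dots> = inv_into VI \<alpha> (\<alpha> x)" using rp(2)[OF aV[OF that]] by simp
    also have "\<dots> = x" using inv_into_f_f[OF ainj that] .
    finally show ?thesis .
  qed
  have phiadj: "adj (VI,EI,psiI) (\<phi> x) (\<phi> z)" if "adj (VI,EI,psiI) x z" for x z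
  proof -
    have m: "x \<in> VI" "z \<in> VI" using adjI_mem[OF that] by auto
    have "adj (Phi K S) (\<alpha> x) (\<alpha> z)" using aadj'[OF m] that by simp
    then have "adj (Phi K S) (rho K k (\<alpha> x)) (rho K k (\<alpha> z))" using rp(3) by blast
    then show ?thesis using aadj'[OF phiV[OF m(1)] phiV[OF m(2)]] aphi m by simp
  qed
  have phi0: "\<phi> (Inr (Eg \<one>)) = Inr (Eg \<one>)"
    unfolding \<phi>_def e0_def[symmetric] v0_def[symmetric] using k(3) inv_into_f_f[OF ainj IE] v0_def by simp
  have phis: "\<phi> (Inl (0, Hs)) = Inl (1, Ht)"
    unfolding \<phi>_def p_def[symmetric] using k(4) inv_into_f_f[OF ainj I1] q_def by simp
  show ?thesis using partA_core[OF phiV phi2 phiadj phi0 phis] by blast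
qed

end


locale STB = ST +
  fixes f
  assumes fH: "\<And>x. x \<in> HH \<Longrightarrow> f x \<in> HH"
    and fmul: "\<And>x y. x \<in> HH \<Longrightarrow> y \<in> HH \<Longrightarrow> f (x \<otimes> y) = f x \<otimes> f y"
    and ff: "\<And>x. x \<in> HH \<Longrightarrow> f (f x) = x"
    and fs: "f s \<in> Ht" and ft: "f t \<in> Hs"
begin

lemma HHc: "x \<in> HH \<Longrightarrow> x \<in> carrier G" using subgroup.subset[OF sHH] by auto
lemma sHH_m: "x \<in> HH \<Longrightarrow> y \<in> HH \<Longrightarrow> x \<otimes> y \<in> HH" using subgroup.m_closed[OF sHH] by auto
lemma sHH_inv: "x \<in> HH \<Longrightarrow> inv x \<in> HH" using subgroup.m_inv_closed[OF sHH] by auto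
lemma one_HH: "\<one> \<in> HH" using generate.one by auto

lemma f1: "f \<one> = \<one>"
proof -
  have "f \<one> \<otimes> f \<one> = f \<one> \<otimes> \<one>" using fmul[OF one_HH one_HH] fH[OF one_HH] HHc by simp
  then show ?thesis using fH[OF one_HH] HHc by (metis l_cancel one_closed)
qed

lemma finv: "x \<in> HH \<Longrightarrow> f (inv x) = inv (f x)"
proof -
  assume x: "x \<in> HH"
  have "f x \<otimes> f (inv x) = \<one>" using fmul[OF x sHH_inv[OF x]] f1 HHc[OF x] by simp
  then show ?thesis using fH x sHH_inv HHc by (metis inv_equality m_closed one_closed r_inv l_cancel inv_closed)
qed

lemma f_Ht: "k \<in> Ht \<Longrightarrow> f k \<in> Hs"
proof (induction rule: generate.induct)
  case one then show ?case using f1 generate.one by auto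
next
  case (incl h) then show ?case using ft by auto
next
  case (inv h) then show ?case using ft finv[of t] generate.incl[of t "{s,t}" G]
      subgroup.m_inv_closed[OF sHs] by auto
next
  case (eng h1 h2)
  then have "h1 \<in> HH" "h2 \<in> HH" using Ht_HH by auto
  then show ?case using eng fmul subgroup.m_closed[OF sHs] by metis
qed

lemma f_Hs: "k \<in> Hs \<Longrightarrow> f k \<in> Ht"
proof (induction rule: generate.induct)
  case one then show ?case using f1 generate.one by auto
next
  case (incl h) then show ?case using fs by auto
next
  case (inv h) then show ?case using fs finv[of s] generate.incl[of s "{s,t}" G]
      subgroup.m_inv_closed[OF sHt] by auto
next
  case (eng h1 h2)
  then have "h1 \<in> HH" "h2 \<in> HH" using Hs_HH by auto
  then show ?case using eng fmul subgroup.m_closed[OF sHt] by metis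
qed

definition Fe :: "bool \<Rightarrow> 'a \<Rightarrow> 'a" where "Fe e x = (if e then f x else x)"

lemma Fe_H: "x \<in> HH \<Longrightarrow> Fe e x \<in> HH" using fH by (simp add: Fe_def)
lemma Fe_mul: "x \<in> HH \<Longrightarrow> y \<in> HH \<Longrightarrow> Fe e (x \<otimes> y) = Fe e x \<otimes> Fe e y" using fmul by (simp add: Fe_def)
lemma Fe_Fe: "x \<in> HH \<Longrightarrow> Fe e (Fe e' x) = Fe (e \<noteq> e') x" using ff by (simp add: Fe_def)
lemma Fe_one: "Fe e \<one> = \<one>" using f1 by (simp add: Fe_def)
lemma Fe_inv: "x \<in> HH \<Longrightarrow> Fe e (inv x) = inv (Fe e x)" using finv by (simp add: Fe_def)

definition L :: "('a \<times> bool) monoid" where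
  "L = \<lparr>carrier = HH \<times> UNIV, monoid.mult = (\<lambda>(h,e) (h',e'). (h \<otimes> Fe e h', e \<noteq> e')), one = (\<one>, False)\<rparr>"

lemma L_mult [simp]: "(h,e) \<otimes>\<^bsub>L\<^esub> (h',e') = (h \<otimes> Fe e h', e \<noteq> e')" by (simp add: L_def)
lemma L_one [simp]: "\<one>\<^bsub>L\<^esub> = (\<one>, False)" by (simp add: L_def)
lemma L_carrier [simp]: "carrier L = HH \<times> UNIV" by (simp add: L_def)

lemma L_group: "group L"
proof (rule groupI)
  show "x \<otimes>\<^bsub>L\<^esub> y \<in> carrier L" if "x \<in> carrier L" "y \<in> carrier L" for x y
    using that by (cases x, cases y) (auto intro: sHH_m Fe_H)
  show "\<one>\<^bsub>L\<^esub> \<in> carrier L" using one_HH by simp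
  show "x \<otimes>\<^bsub>L\<^esub> y \<otimes>\<^bsub>L\<^esub> z = x \<otimes>\<^bsub>L\<^esub> (y \<otimes>\<^bsub>L\<^esub> z)"
    if "x \<in> carrier L" "y \<in> carrier L" "z \<in> carrier L" for x y z
  proof -
    obtain h1 e1 h2 e2 h3 e3 where xyz: "x = (h1,e1)" "y = (h2,e2)" "z = (h3,e3)"
      by (metis surj_pair)
    have h: "h1 \<in> HH" "h2 \<in> HH" "h3 \<in> HH" using that xyz by auto
    have "h1 \<otimes> Fe e1 (h2 \<otimes> Fe e2 h3) = h1 \<otimes> Fe e1 h2 \<otimes> Fe (e1 \<noteq> e2) h3"
      using h by (simp add: Fe_mul Fe_H Fe_Fe HHc m_assoc)
    then show ?thesis using xyz by auto
  qed
  show "\<one>\<^bsub>L\<^esub> \<otimes>\<^bsub>L\<^esub> x = x" if "x \<in> carrier L" for x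
    using that by (cases x) (auto simp: Fe_def HHc)
  show "\<exists>y\<in>carrier L. y \<otimes>\<^bsub>L\<^esub> x = \<one>\<^bsub>L\<^esub>" if hx: "x \<in> carrier L" for x
  proof -
    obtain h e where x: "x = (h,e)" "h \<in> HH" using hx by (cases x) auto
    have "Fe e (inv h) \<otimes> Fe e h = \<one>"
      using x(2) by (simp add: Fe_inv[symmetric] Fe_mul[symmetric] sHH_inv HHc Fe_one)
    then show ?thesis using x sHH_inv Fe_H by (intro bexI[of _ "(Fe e (inv h), e)"]) auto
  qed
qed

end


context STB
begin

definition rep where "rep g = (SOME x. x \<in> HH #> g)"
definition T where "T = rep ` carrier G"
definition hp where "hp g = g \<otimes> inv (rep g)"

lemma rep_in: "g \<in> carrier G \<Longrightarrow> rep g \<in> HH #> g"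
  unfolding rep_def by (rule someI[of _ g]) (rule rcos_self[OF _ sHH])

lemma rep_c: "g \<in> carrier G \<Longrightarrow> rep g \<in> carrier G"
  using rep_in subgroup.elemrcos_carrier[OF sHH is_group] by blast

lemma rep_coset: "g \<in> carrier G \<Longrightarrow> HH #> rep g = HH #> g"
  using repr_independence[OF rep_in _ sHH] by simp

lemma hp_H: "g \<in> carrier G \<Longrightarrow> hp g \<in> HH"
proof -
  assume g: "g \<in> carrier G"
  have "rep g \<otimes> inv g \<in> HH" using subgroup.rcos_module_imp[OF sHH is_group g rep_in[OF g]] .
  then have "inv (rep g \<otimes> inv g) \<in> HH" using sHH_inv by blast
  then show ?thesis using g rep_c[OF g] by (simp add: hp_def inv_mult_group)
qed

lemma decomp: "g \<in> carrier G \<Longrightarrow> hp g \<otimes> rep g = g"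
  using rep_c by (simp add: hp_def m_assoc)

lemma T_c: "T \<subseteq> carrier G" using rep_c by (auto simp: T_def)
lemma T_ne: "T \<noteq> {}" by (auto simp: T_def)

lemma uniq:
  assumes h: "h \<in> HH" "h' \<in> HH" and x: "x \<in> T" "x' \<in> T" and eq: "h \<otimes> x = h' \<otimes> x'"
  shows "h = h' \<and> x = x'"
proof -
  obtain g1 g2 where g: "g1 \<in> carrier G" "g2 \<in> carrier G" "x = rep g1" "x' = rep g2" using x by (auto simp: T_def)
  have xc: "x \<in> carrier G" "x' \<in> carrier G" using x T_c by auto
  have "HH #> x = HH #> (h \<otimes> x)" using coset_left[OF sHH h(1) xc(1)] by simp
  also have "\<dots> = HH #> (h' \<otimes> x')" using eq by simp
  also have "\<dots> = HH #> x'" using coset_left[OF sHH h(2) xc(2)] .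
  finally have "HH #> g1 = HH #> g2" using rep_coset g by simp
  then have xx: "x = x'" using g by (simp add: rep_def)
  then have "h = h'" using eq h xc HHc by (metis r_cancel)
  then show ?thesis using xx by simp
qed

lemma rep_T: "g \<in> carrier G \<Longrightarrow> rep g \<in> T" by (simp add: T_def)

lemma hp_rep:
  assumes h: "h \<in> HH" and x: "x \<in> T"
  shows "rep (h \<otimes> x) = x" "hp (h \<otimes> x) = h"
proof -
  have c: "h \<otimes> x \<in> carrier G" using h x HHc T_c by auto
  have "hp (h \<otimes> x) \<otimes> rep (h \<otimes> x) = h \<otimes> x" using decomp[OF c] .
  then have "hp (h \<otimes> x) = h \<and> rep (h \<otimes> x) = x" using uniq[OF hp_H[OF c] h rep_T[OF c] x] by blast
  then show "rep (h \<otimes> x) = x" "hp (h \<otimes> x) = h" by auto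
qed

end

locale STBQ = STB +
  fixes Q :: "'a monoid"
  assumes grpQ: "group Q" and cQ: "carrier Q = T"
begin

definition M where "M = L \<times>\<times> Q"
definition emb :: "('a \<times> bool) \<times> 'a \<Rightarrow> 'a \<times> bool" where "emb u = (fst (fst u) \<otimes> snd u, snd (fst u))"
definition a0 where "a0 = ((s, False), \<one>\<^bsub>Q\<^esub>)"
definition b0 where "b0 = ((\<one>, True), \<one>\<^bsub>Q\<^esub>)"

lemma grpM: "group M" unfolding M_def using DirProd_group[OF L_group grpQ] .
lemma cM: "carrier M = (HH \<times> UNIV) \<times> T" by (simp add: M_def cQ)
lemma mM: "((h,e),x) \<otimes>\<^bsub>M\<^esub> ((h',e'),x') = ((h \<otimes> Fe e h', e \<noteq> e'), x \<otimes>\<^bsub>Q\<^esub> x')" by (simp add: M_def)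
lemma oneM: "\<one>\<^bsub>M\<^esub> = ((\<one>, False), \<one>\<^bsub>Q\<^esub>)" by (simp add: M_def)
lemma oneQ: "\<one>\<^bsub>Q\<^esub> \<in> T" using group.is_monoid[OF grpQ] monoid.one_closed cQ by blast
lemma lQ: "x \<in> T \<Longrightarrow> \<one>\<^bsub>Q\<^esub> \<otimes>\<^bsub>Q\<^esub> x = x" using grpQ cQ by (metis group.is_monoid monoid.l_one)

lemma emb_bij: "bij_betw emb (carrier M) (carrier G \<times> UNIV)"
proof (rule bij_betw_imageI)
  show "inj_on emb (carrier M)"
  proof (rule inj_onI)
    fix u w assume u: "u \<in> carrier M" and w: "w \<in> carrier M" and e: "emb u = emb w"
    obtain h e1 x where uu: "u = ((h,e1),x)" "h \<in> HH" "x \<in> T" using u cM by auto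
    obtain h' e2 x' where ww: "w = ((h',e2),x')" "h' \<in> HH" "x' \<in> T" using w cM by auto
    show "u = w" using e uu ww uniq[of h h' x x'] by (auto simp: emb_def)
  qed
  show "emb ` carrier M = carrier G \<times> UNIV"
  proof
    show "emb ` carrier M \<subseteq> carrier G \<times> UNIV" using HHc T_c by (auto simp: cM emb_def)
    show "carrier G \<times> UNIV \<subseteq> emb ` carrier M"
    proof
      fix z assume "z \<in> carrier G \<times> (UNIV :: bool set)"
      then obtain g e where z: "z = (g,e)" "g \<in> carrier G" by auto
      have "emb ((hp g, e), rep g) = z" using decomp z by (simp add: emb_def)
      moreover have "((hp g, e), rep g) \<in> carrier M" using hp_H rep_T z by (simp add: cM)
      ultimately show "z \<in> emb ` carrier M" by (metis imageI)
    qed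
  qed
qed

definition K where "K = tr M emb (carrier G \<times> UNIV)"

lemma grpK: "group K" unfolding K_def using tr_group(1)[OF grpM emb_bij] .
lemma isoK: "emb \<in> iso M K" unfolding K_def using tr_group(2)[OF grpM emb_bij] .
lemma cK: "carrier K = carrier G \<times> UNIV" by (simp add: K_def tr_def)

lemma a0M: "a0 \<in> carrier M" using generate.incl[of s "{s,t}" G] oneQ by (simp add: a0_def cM)
lemma b0M: "b0 \<in> carrier M" using one_HH oneQ by (simp add: b0_def cM)

lemma genA: "generate M {a0} = (\<lambda>k. ((k, False), \<one>\<^bsub>Q\<^esub>)) ` Hs"
proof
  interpret M: group M by (rule grpM)
  have sub: "subgroup ((\<lambda>k. ((k, False), \<one>\<^bsub>Q\<^esub>)) ` Hs) M"
  proof (rule M.subgroupI)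
    show "(\<lambda>k. ((k, False), \<one>\<^bsub>Q\<^esub>)) ` Hs \<subseteq> carrier M" using Hs_HH oneQ by (auto simp: cM)
    show "(\<lambda>k. ((k, False), \<one>\<^bsub>Q\<^esub>)) ` Hs \<noteq> {}" using generate.one by blast
    show "inv\<^bsub>M\<^esub> a \<in> (\<lambda>k. ((k, False), \<one>\<^bsub>Q\<^esub>)) ` Hs" if ha: "a \<in> (\<lambda>k. ((k, False), \<one>\<^bsub>Q\<^esub>)) ` Hs" for a
    proof -
      obtain k where k: "k \<in> Hs" "a = ((k, False), \<one>\<^bsub>Q\<^esub>)" using ha by auto
      have kc: "k \<in> carrier G" using k Hs_HH HHc by auto
      have "((inv k, False), \<one>\<^bsub>Q\<^esub>) \<otimes>\<^bsub>M\<^esub> a = \<one>\<^bsub>M\<^esub>"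
        using k kc lQ[OF oneQ] by (simp add: mM oneM Fe_def)
      moreover have "((inv k, False), \<one>\<^bsub>Q\<^esub>) \<in> carrier M" "a \<in> carrier M"
        using k kc oneQ Hs_HH sHH_inv subgroup.m_inv_closed[OF sHs] by (auto simp: cM)
      ultimately have "inv\<^bsub>M\<^esub> a = ((inv k, False), \<one>\<^bsub>Q\<^esub>)" using M.inv_equality by blast
      then show ?thesis using subgroup.m_inv_closed[OF sHs k(1)] by auto
    qed
    show "a \<otimes>\<^bsub>M\<^esub> b \<in> (\<lambda>k. ((k, False), \<one>\<^bsub>Q\<^esub>)) ` Hs"
      if "a \<in> (\<lambda>k. ((k, False), \<one>\<^bsub>Q\<^esub>)) ` Hs" "b \<in> (\<lambda>k. ((k, False), \<one>\<^bsub>Q\<^esub>)) ` Hs" for a b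
      using that lQ[OF oneQ] subgroup.m_closed[OF sHs] by (auto simp: mM Fe_def)
  qed
  have "a0 \<in> (\<lambda>k. ((k, False), \<one>\<^bsub>Q\<^esub>)) ` Hs" using generate.incl[of s "{s}" G] by (auto simp: a0_def)
  then show "generate M {a0} \<subseteq> (\<lambda>k. ((k, False), \<one>\<^bsub>Q\<^esub>)) ` Hs"
    using M.generate_subgroup_incl[OF _ sub] by auto
  show "(\<lambda>k. ((k, False), \<one>\<^bsub>Q\<^esub>)) ` Hs \<subseteq> generate M {a0}"
  proof
    fix z assume "z \<in> (\<lambda>k. ((k, False), \<one>\<^bsub>Q\<^esub>)) ` Hs"
    then obtain k where k: "k \<in> Hs" "z = ((k, False), \<one>\<^bsub>Q\<^esub>)" by auto
    have "((k, False), \<one>\<^bsub>Q\<^esub>) \<in> generate M {a0}" using k(1)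
    proof (induction rule: generate.induct)
      case one then show ?case using generate.one[of M "{a0}"] by (simp add: oneM)
    next
      case (incl h) then show ?case using generate.incl[of a0 "{a0}" M] by (simp add: a0_def)
    next
      case (inv h)
      have sc: "s \<in> carrier G" using s .
      have "((inv s, False), \<one>\<^bsub>Q\<^esub>) \<otimes>\<^bsub>M\<^esub> a0 = \<one>\<^bsub>M\<^esub>"
        using sc lQ[OF oneQ] by (simp add: a0_def mM oneM Fe_def)
      moreover have "((inv s, False), \<one>\<^bsub>Q\<^esub>) \<in> carrier M"
        using oneQ sHH_inv generate.incl[of s "{s,t}" G] by (auto simp: cM)
      ultimately have "inv\<^bsub>M\<^esub> a0 = ((inv s, False), \<one>\<^bsub>Q\<^esub>)" using M.inv_equality a0M by blast
      then show ?case using inv generate.inv[of a0 "{a0}" M] by simp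
    next
      case (eng h1 h2)
      have "((h1, False), \<one>\<^bsub>Q\<^esub>) \<otimes>\<^bsub>M\<^esub> ((h2, False), \<one>\<^bsub>Q\<^esub>) = ((h1 \<otimes> h2, False), \<one>\<^bsub>Q\<^esub>)"
        using lQ[OF oneQ] by (simp add: mM Fe_def)
      then show ?case using eng generate.eng by metis
    qed
    then show "z \<in> generate M {a0}" using k by simp
  qed
qed

lemma b0b0: "b0 \<otimes>\<^bsub>M\<^esub> b0 = \<one>\<^bsub>M\<^esub>"
  using lQ[OF oneQ] f1 by (simp add: b0_def mM oneM Fe_def)

lemma genB: "generate M {b0} = {\<one>\<^bsub>M\<^esub>, b0}"
proof
  interpret M: group M by (rule grpM)
  have sub: "subgroup {\<one>\<^bsub>M\<^esub>, b0} M"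
  proof (rule M.subgroupI)
    show "{\<one>\<^bsub>M\<^esub>, b0} \<subseteq> carrier M" using b0M by auto
    show "inv\<^bsub>M\<^esub> a \<in> {\<one>\<^bsub>M\<^esub>, b0}" if "a \<in> {\<one>\<^bsub>M\<^esub>, b0}" for a
      using that M.inv_equality[OF b0b0 b0M b0M] by auto
    show "a \<otimes>\<^bsub>M\<^esub> b \<in> {\<one>\<^bsub>M\<^esub>, b0}" if "a \<in> {\<one>\<^bsub>M\<^esub>, b0}" "b \<in> {\<one>\<^bsub>M\<^esub>, b0}" for a b
      using that b0b0 b0M by auto
  qed simp
  show "generate M {b0} \<subseteq> {\<one>\<^bsub>M\<^esub>, b0}" using M.generate_subgroup_incl[OF _ sub] by auto
  show "{\<one>\<^bsub>M\<^esub>, b0} \<subseteq> generate M {b0}" using generate.one[of M "{b0}"] generate.incl[of b0 "{b0}" M] by auto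
qed

lemma cosA:
  assumes u: "u \<in> carrier M" and w: "w \<in> carrier M"
  shows "(generate M {a0} #>\<^bsub>M\<^esub> u = generate M {a0} #>\<^bsub>M\<^esub> w) \<longleftrightarrow>
         (\<exists>k\<in>Hs. w = ((k \<otimes> fst (fst u), snd (fst u)), snd u))"
proof -
  interpret M: group M by (rule grpM)
  have sA: "subgroup (generate M {a0}) M" using M.generate_is_subgroup a0M by simp
  obtain h e x where uu: "u = ((h,e),x)" "x \<in> T" using u cM by auto
  have "(generate M {a0} #>\<^bsub>M\<^esub> u = generate M {a0} #>\<^bsub>M\<^esub> w) \<longleftrightarrow> w \<in> generate M {a0} #>\<^bsub>M\<^esub> u"
    using M.rcos_eq_mem[OF sA u w] .
  also have "\<dots> \<longleftrightarrow> (\<exists>k\<in>Hs. w = ((k \<otimes> fst (fst u), snd (fst u)), snd u))"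
    unfolding genA r_coset_def using uu lQ by (auto simp: mM Fe_def)
  finally show ?thesis .
qed

lemma cosB:
  assumes u: "u \<in> carrier M" and w: "w \<in> carrier M"
  shows "(generate M {b0} #>\<^bsub>M\<^esub> u = generate M {b0} #>\<^bsub>M\<^esub> w) \<longleftrightarrow>
         (w = u \<or> w = ((f (fst (fst u)), \<not> snd (fst u)), snd u))"
proof -
  interpret M: group M by (rule grpM)
  have sB: "subgroup (generate M {b0}) M" using M.generate_is_subgroup b0M by simp
  obtain h e x where uu: "u = ((h,e),x)" "h \<in> HH" "x \<in> T" using u cM by auto
  have "(generate M {b0} #>\<^bsub>M\<^esub> u = generate M {b0} #>\<^bsub>M\<^esub> w) \<longleftrightarrow> w \<in> generate M {b0} #>\<^bsub>M\<^esub> u"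
    using M.rcos_eq_mem[OF sB u w] .
  also have "\<dots> \<longleftrightarrow> (w = u \<or> w = ((f (fst (fst u)), \<not> snd (fst u)), snd u))"
    unfolding genB r_coset_def using uu lQ M.l_one[OF u] HHc fH
    by (auto simp: mM Fe_def b0_def)
  finally show ?thesis .
qed

end


context STB
begin

lemma f_inj: "x \<in> HH \<Longrightarrow> y \<in> HH \<Longrightarrow> f x = f y \<Longrightarrow> x = y" using ff by metis

lemma gg: "g \<in> carrier G \<Longrightarrow> g' \<in> carrier G \<Longrightarrow> (hp g = hp g' \<and> rep g = rep g') \<longleftrightarrow> g = g'"
  using decomp by metis

lemma L00:
  assumes g: "g \<in> carrier G" and g': "g' \<in> carrier G"
  shows "(Hs #> g = Hs #> g') \<longleftrightarrow> (\<exists>k\<in>Hs. hp g' = k \<otimes> hp g \<and> rep g' = rep g)"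
proof
  assume "Hs #> g = Hs #> g'"
  then have "g' \<in> Hs #> g" using rcos_eq_mem[OF sHs g g'] by simp
  then obtain k where k: "k \<in> Hs" "g' = k \<otimes> g" by (auto simp: r_coset_def)
  have kH: "k \<in> HH" "k \<in> carrier G" using k Hs_HH HHc by auto
  have "g' = (k \<otimes> hp g) \<otimes> rep g" using k(2) decomp[OF g] kH hp_H[OF g] rep_c[OF g] HHc
    by (simp add: m_assoc)
  moreover have "k \<otimes> hp g \<in> HH" using sHH_m kH hp_H g by blast
  ultimately have "rep g' = rep g" "hp g' = k \<otimes> hp g" using hp_rep rep_T[OF g] by metis+
  then show "\<exists>k\<in>Hs. hp g' = k \<otimes> hp g \<and> rep g' = rep g" using k by blast
next
  assume "\<exists>k\<in>Hs. hp g' = k \<otimes> hp g \<and> rep g' = rep g"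
  then obtain k where k: "k \<in> Hs" "hp g' = k \<otimes> hp g" "rep g' = rep g" by blast
  have kc: "k \<in> carrier G" using k Hs_HH HHc by auto
  have "g' = k \<otimes> g"
    using decomp[OF g'] decomp[OF g] k kc hp_H[OF g] rep_c[OF g] HHc by (metis m_assoc)
  then show "Hs #> g = Hs #> g'" using coset_left[OF sHs k(1) g] by simp
qed

lemma L11:
  assumes g: "g \<in> carrier G" and g': "g' \<in> carrier G"
  shows "(Ht #> g = Ht #> g') \<longleftrightarrow> (\<exists>k\<in>Hs. f (hp g') = k \<otimes> f (hp g) \<and> rep g' = rep g)"
proof
  assume "Ht #> g = Ht #> g'"
  then have "g' \<in> Ht #> g" using rcos_eq_mem[OF sHt g g'] by simp
  then obtain k where k: "k \<in> Ht" "g' = k \<otimes> g" by (auto simp: r_coset_def)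
  have kH: "k \<in> HH" "k \<in> carrier G" using k Ht_HH HHc by auto
  have "g' = (k \<otimes> hp g) \<otimes> rep g" using k(2) decomp[OF g] kH hp_H[OF g] rep_c[OF g] HHc
    by (simp add: m_assoc)
  moreover have "k \<otimes> hp g \<in> HH" using sHH_m kH hp_H g by blast
  ultimately have "rep g' = rep g" "hp g' = k \<otimes> hp g" using hp_rep rep_T[OF g] by metis+
  moreover have "f (k \<otimes> hp g) = f k \<otimes> f (hp g)" using fmul kH hp_H g by blast
  ultimately show "\<exists>k\<in>Hs. f (hp g') = k \<otimes> f (hp g) \<and> rep g' = rep g" using f_Ht[OF k(1)] by metis
next
  assume "\<exists>k\<in>Hs. f (hp g') = k \<otimes> f (hp g) \<and> rep g' = rep g"
  then obtain k where k: "k \<in> Hs" "f (hp g') = k \<otimes> f (hp g)" "rep g' = rep g" by blast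
  have kH: "k \<in> HH" using k Hs_HH by auto
  have "hp g' = f (k \<otimes> f (hp g))" using ff[OF hp_H[OF g']] k(2) by simp
  also have "\<dots> = f k \<otimes> hp g" using fmul[OF kH fH[OF hp_H[OF g]]] ff[OF hp_H[OF g]] by simp
  finally have hpg': "hp g' = f k \<otimes> hp g" .
  have fk: "f k \<in> Ht" "f k \<in> carrier G" using f_Hs[OF k(1)] Ht_HH HHc by auto
  have "g' = f k \<otimes> g"
    using decomp[OF g'] decomp[OF g] hpg' k(3) fk hp_H[OF g] rep_c[OF g] HHc by (metis m_assoc)
  then show "Ht #> g = Ht #> g'" using coset_left[OF sHt fk(1) g] by simp
qed

end

context STBQ
begin

definition beta0 :: "(nat \<times> 'a set) \<times> ((nat \<times> 'a set) \<times> (nat \<times> 'a set) \<times> 'a) \<Rightarrow> ('a \<times> bool) \<times> 'a" where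
  "beta0 e = (let g = snd (snd (snd e)) in
     if fst (fst e) = 0 then ((hp g, False), rep g) else ((f (hp g), True), rep g))"

lemma beta0_0: "beta0 ((0, C), Eg g) = ((hp g, False), rep g)" by (simp add: beta0_def Eg_def)
lemma beta0_1: "beta0 ((Suc 0, C), Eg g) = ((f (hp g), True), rep g)" by (simp add: beta0_def Eg_def)

lemma EI_cases:
  assumes "e \<in> EI"
  obtains g where "g \<in> carrier G" "e = ((0, Hs #> g), Eg g)"
    | g where "g \<in> carrier G" "e = ((1, Ht #> g), Eg g)"
  using assms by (cases e) (auto simp: EI_iff)

lemma beta0_M: "e \<in> EI \<Longrightarrow> beta0 e \<in> carrier M"
  by (erule EI_cases) (auto simp: beta0_0 beta0_1 cM hp_H fH rep_T)

lemma beta0_bij: "bij_betw beta0 EI (carrier M)"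
proof (rule bij_betw_imageI)
  show "inj_on beta0 EI"
  proof (rule inj_onI)
    fix e e' assume e: "e \<in> EI" and e': "e' \<in> EI" and eq: "beta0 e = beta0 e'"
    show "e = e'"
      using e e' eq
    proof (elim EI_cases)
      fix g g' assume g: "g \<in> carrier G" and g': "g' \<in> carrier G"
      have fi: "f (hp g) = f (hp g') \<longleftrightarrow> hp g = hp g'" using f_inj hp_H g g' by metis
      have gg': "(hp g = hp g' \<and> rep g = rep g') \<longleftrightarrow> g = g'" using gg[OF g g'] .
      { assume "e = ((0, Hs #> g), Eg g)" "e' = ((0, Hs #> g'), Eg g')" "beta0 e = beta0 e'"
        then show ?thesis using gg' by (auto simp: beta0_0) }
      { assume "e = ((1, Ht #> g), Eg g)" "e' = ((1, Ht #> g'), Eg g')" "beta0 e = beta0 e'"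
        then show ?thesis using gg' fi by (auto simp: beta0_1) }
      { assume "e = ((0, Hs #> g), Eg g)" "e' = ((1, Ht #> g'), Eg g')" "beta0 e = beta0 e'"
        then show ?thesis by (auto simp: beta0_0 beta0_1) }
      { assume "e = ((1, Ht #> g), Eg g)" "e' = ((0, Hs #> g'), Eg g')" "beta0 e = beta0 e'"
        then show ?thesis by (auto simp: beta0_0 beta0_1) }
    qed
  qed
  show "beta0 ` EI = carrier M"
  proof
    show "beta0 ` EI \<subseteq> carrier M" using beta0_M by auto
    show "carrier M \<subseteq> beta0 ` EI"
    proof
      fix u assume "u \<in> carrier M"
      then obtain h e x where u: "u = ((h,e),x)" "h \<in> HH" "x \<in> T" by (auto simp: cM)
      show "u \<in> beta0 ` EI"
      proof (cases e)
        case False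
        define g where "g = h \<otimes> x"
        have g: "g \<in> carrier G" using u HHc T_c by (auto simp: g_def)
        have "beta0 ((0, Hs #> g), Eg g) = u" using hp_rep[OF u(2,3)] u False by (simp add: beta0_0 g_def)
        moreover have "((0, Hs #> g), Eg g) \<in> EI" using g by (auto simp: EI_iff)
        ultimately show ?thesis by (metis imageI)
      next
        case True
        define g where "g = f h \<otimes> x"
        have g: "g \<in> carrier G" using u HHc T_c fH by (auto simp: g_def)
        have "beta0 ((1, Ht #> g), Eg g) = u" using hp_rep[OF fH[OF u(2)] u(3)] u True ff
          by (simp add: beta0_1 g_def)
        moreover have "((1, Ht #> g), Eg g) \<in> EI" using g by (auto simp: EI_iff)
        ultimately show ?thesis by (metis imageI)
      qed
    qed
  qed
qed

lemma Pcond: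
  assumes e: "e \<in> EI" and e': "e' \<in> EI"
  shows "fst e = fst e' \<longleftrightarrow> (\<exists>k\<in>Hs. beta0 e' = ((k \<otimes> fst (fst (beta0 e)), snd (fst (beta0 e))), snd (beta0 e)))"
  using e e'
proof (elim EI_cases)
  fix g g' assume g: "g \<in> carrier G" and g': "g' \<in> carrier G"
  { assume "e = ((0, Hs #> g), Eg g)" "e' = ((0, Hs #> g'), Eg g')"
    then show ?thesis using L00[OF g g'] by (auto simp: beta0_0) }
  { assume "e = ((1, Ht #> g), Eg g)" "e' = ((1, Ht #> g'), Eg g')"
    then show ?thesis using L11[OF g g'] by (auto simp: beta0_1) }
  { assume "e = ((0, Hs #> g), Eg g)" "e' = ((1, Ht #> g'), Eg g')"
    then show ?thesis by (auto simp: beta0_0 beta0_1) }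
  { assume "e = ((1, Ht #> g), Eg g)" "e' = ((0, Hs #> g'), Eg g')"
    then show ?thesis by (auto simp: beta0_0 beta0_1) }
qed

lemma Qcond:
  assumes e: "e \<in> EI" and e': "e' \<in> EI"
  shows "snd e = snd e' \<longleftrightarrow> (beta0 e' = beta0 e \<or> beta0 e' = ((f (fst (fst (beta0 e))), \<not> snd (fst (beta0 e))), snd (beta0 e)))"
  using e e'
proof (elim EI_cases)
  fix g g' assume g: "g \<in> carrier G" and g': "g' \<in> carrier G"
  have Eeq: "Eg g = Eg g' \<longleftrightarrow> g = g'" using Eg_inj by blast
  have fi: "f (hp g') = f (hp g) \<longleftrightarrow> hp g' = hp g" using f_inj hp_H g g' by metis
  have ffg: "f (f (hp g)) = hp g" using ff hp_H g by blast
  { assume "e = ((0, Hs #> g), Eg g)" "e' = ((0, Hs #> g'), Eg g')"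
    then show ?thesis using gg[OF g g'] Eeq by (auto simp: beta0_0) }
  { assume "e = ((1, Ht #> g), Eg g)" "e' = ((1, Ht #> g'), Eg g')"
    then show ?thesis using gg[OF g g'] Eeq fi by (auto simp: beta0_1) }
  { assume "e = ((0, Hs #> g), Eg g)" "e' = ((1, Ht #> g'), Eg g')"
    then show ?thesis using gg[OF g g'] Eeq fi by (auto simp: beta0_0 beta0_1) }
  { assume "e = ((1, Ht #> g), Eg g)" "e' = ((0, Hs #> g'), Eg g')"
    then show ?thesis using gg[OF g g'] Eeq ffg by (auto simp: beta0_0 beta0_1) }
qed

lemma main_iso: "mg_iso (VI, EI, psiI) (Phi K [emb a0, emb b0])"
proof (rule gen_iso[where \<beta> = "emb \<circ> beta0" and P = "\<lambda>e. Inl (fst e)" and Q = "\<lambda>e. Inr (snd e)"])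
  show "group K" by (rule grpK)
  have ec: "emb u \<in> carrier K" if "u \<in> carrier M" for u
    using emb_bij that cK by (auto simp: bij_betw_def)
  show "emb a0 \<in> carrier K" using ec a0M .
  show "emb b0 \<in> carrier K" using ec b0M .
  show "bij_betw (emb \<circ> beta0) EI (carrier K)"
    using bij_betw_trans[OF beta0_bij emb_bij] cK by simp
  show "psiI e = {Inl (fst e), Inr (snd e)}" for e by (cases e) (simp add: psiI_def)
  show "VI = (\<lambda>e. Inl (fst e)) ` EI \<union> (\<lambda>e. Inr (snd e)) ` EI"
  proof
    show "VI \<subseteq> (\<lambda>e. Inl (fst e)) ` EI \<union> (\<lambda>e. Inr (snd e)) ` EI"
    proof
      fix z assume "z \<in> VI"
      then consider g where "g \<in> carrier G" "z = Inl (0, Hs #> g)"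
        | g where "g \<in> carrier G" "z = Inl (1, Ht #> g)"
        | g where "g \<in> carrier G" "z = Inr (Eg g)"
        unfolding VI_eq VG by blast
      then show "z \<in> (\<lambda>e. Inl (fst e)) ` EI \<union> (\<lambda>e. Inr (snd e)) ` EI"
      proof cases
        case (1 g) then show ?thesis
          by (intro UnI1 image_eqI[of _ _ "((0, Hs #> g), Eg g)"]) (auto simp: EI_iff)
      next
        case (2 g) then show ?thesis
          by (intro UnI1 image_eqI[of _ _ "((1, Ht #> g), Eg g)"]) (auto simp: EI_iff)
      next
        case (3 g) then show ?thesis
          by (intro UnI2 image_eqI[of _ _ "((0, Hs #> g), Eg g)"]) (auto simp: EI_iff)
      qed
    qed
    show "(\<lambda>e. Inl (fst e)) ` EI \<union> (\<lambda>e. Inr (snd e)) ` EI \<subseteq> VI"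
      using wfI unfolding psiI_def by fastforce
  qed
  show "Inl (fst e) \<noteq> Inr (snd e')" for e e' by simp
  show "Inl (fst e) = Inl (fst e') \<longleftrightarrow>
        generate K {emb a0} #>\<^bsub>K\<^esub> (emb \<circ> beta0) e = generate K {emb a0} #>\<^bsub>K\<^esub> (emb \<circ> beta0) e'"
    if "e \<in> EI" "e' \<in> EI" for e e'
    using Pcond[OF that] cosA[OF beta0_M beta0_M, OF that]
      iso_rcos_eq[OF grpM grpK isoK a0M beta0_M beta0_M, OF that] by simp
  show "Inr (snd e) = Inr (snd e') \<longleftrightarrow>
        generate K {emb b0} #>\<^bsub>K\<^esub> (emb \<circ> beta0) e = generate K {emb b0} #>\<^bsub>K\<^esub> (emb \<circ> beta0) e'"
    if "e \<in> EI" "e' \<in> EI" for e e'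
    using Qcond[OF that] cosB[OF beta0_M beta0_M, OF that]
      iso_rcos_eq[OF grpM grpK isoK b0M beta0_M beta0_M, OF that] by simp
qed

lemma partB_Q: "G_graph TYPE('a \<times> bool) (incidence (Phi G [s,t]))"
proof -
  have ec: "emb u \<in> carrier K" if "u \<in> carrier M" for u
    using emb_bij that cK by (auto simp: bij_betw_def)
  show ?thesis unfolding G_graph_def incid
    using grpK main_iso ec[OF a0M] ec[OF b0M] by (intro exI[of _ K] exI[of _ "[emb a0, emb b0]"]) auto
qed

end


theorem theorem2:
  fixes G :: "('a, 'b) monoid_scheme" and s t :: 'a
  assumes "group G" and "s \<in> carrier G" and "t \<in> carrier G" and "s \<noteq> t"
  shows
   "(G_graph TYPE('k) (incidence (Phi G [s, t])) \<longrightarrow>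
      (\<exists>f. f \<in> generate G {s, t} \<rightarrow> generate G {s, t}
         \<and> (\<forall>x\<in>generate G {s, t}. f (f x) = x)
         \<and> f \<one>\<^bsub>G\<^esub> = \<one>\<^bsub>G\<^esub>
         \<and> (\<forall>x\<in>generate G {s, t}. \<exists>(m::int) (n::int).
               f (s \<otimes>\<^bsub>G\<^esub> x) = t [^]\<^bsub>G\<^esub> m \<otimes>\<^bsub>G\<^esub> f x
             \<and> f (t \<otimes>\<^bsub>G\<^esub> x) = s [^]\<^bsub>G\<^esub> n \<otimes>\<^bsub>G\<^esub> f x)))
    \<and>
    ((\<exists>f. f \<in> hom (G\<lparr>carrier := generate G {s, t}\<rparr>) (G\<lparr>carrier := generate G {s, t}\<rparr>)
         \<and> (\<forall>x\<in>generate G {s, t}. f (f x) = x)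
         \<and> f \<one>\<^bsub>G\<^esub> = \<one>\<^bsub>G\<^esub>
         \<and> (\<forall>x\<in>generate G {s, t}. \<exists>(m::int) (n::int).
               f (s \<otimes>\<^bsub>G\<^esub> x) = t [^]\<^bsub>G\<^esub> m \<otimes>\<^bsub>G\<^esub> f x
             \<and> f (t \<otimes>\<^bsub>G\<^esub> x) = s [^]\<^bsub>G\<^esub> n \<otimes>\<^bsub>G\<^esub> f x))
      \<longrightarrow> G_graph TYPE('a \<times> bool) (incidence (Phi G [s, t])))"
proof -
  interpret ST G s t using assms by (simp add: ST_def ST_axioms_def)
  have A: "G_graph TYPE('k) (incidence (Phi G [s, t])) \<longrightarrow>
      (\<exists>f. f \<in> generate G {s, t} \<rightarrow> generate G {s, t}
         \<and> (\<forall>x\<in>generate G {s, t}. f (f x) = x)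
         \<and> f \<one>\<^bsub>G\<^esub> = \<one>\<^bsub>G\<^esub>
         \<and> (\<forall>x\<in>generate G {s, t}. \<exists>(m::int) (n::int).
               f (s \<otimes>\<^bsub>G\<^esub> x) = t [^]\<^bsub>G\<^esub> m \<otimes>\<^bsub>G\<^esub> f x
             \<and> f (t \<otimes>\<^bsub>G\<^esub> x) = s [^]\<^bsub>G\<^esub> n \<otimes>\<^bsub>G\<^esub> f x))"
    using partA by blast
  have B: "G_graph TYPE('a \<times> bool) (incidence (Phi G [s, t]))"
    if hyp: "\<exists>f. f \<in> hom (G\<lparr>carrier := generate G {s, t}\<rparr>) (G\<lparr>carrier := generate G {s, t}\<rparr>)
         \<and> (\<forall>x\<in>generate G {s, t}. f (f x) = x)
         \<and> f \<one>\<^bsub>G\<^esub> = \<one>\<^bsub>G\<^esub>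
         \<and> (\<forall>x\<in>generate G {s, t}. \<exists>(m::int) (n::int).
               f (s \<otimes>\<^bsub>G\<^esub> x) = t [^]\<^bsub>G\<^esub> m \<otimes>\<^bsub>G\<^esub> f x
             \<and> f (t \<otimes>\<^bsub>G\<^esub> x) = s [^]\<^bsub>G\<^esub> n \<otimes>\<^bsub>G\<^esub> f x)"
  proof -
    obtain f where hom: "f \<in> hom (G\<lparr>carrier := HH\<rparr>) (G\<lparr>carrier := HH\<rparr>)"
      and ff: "\<forall>x\<in>HH. f (f x) = x" and f1: "f \<one>\<^bsub>G\<^esub> = \<one>\<^bsub>G\<^esub>"
      and cnd: "\<forall>x\<in>HH. \<exists>(m::int) (n::int). f (s \<otimes>\<^bsub>G\<^esub> x) = t [^]\<^bsub>G\<^esub> m \<otimes>\<^bsub>G\<^esub> f x \<and> f (t \<otimes>\<^bsub>G\<^esub> x) = s [^]\<^bsub>G\<^esub> n \<otimes>\<^bsub>G\<^esub> f x"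
      using hyp by blast
    have fH: "f x \<in> HH" if "x \<in> HH" for x
      using hom that unfolding hom_def by auto
    have fmul: "f (x \<otimes>\<^bsub>G\<^esub> y) = f x \<otimes>\<^bsub>G\<^esub> f y" if "x \<in> HH" "y \<in> HH" for x y
      using hom that unfolding hom_def by auto
    have one: "\<one>\<^bsub>G\<^esub> \<in> HH" using generate.one by auto
    obtain m n :: int where mn: "f (s \<otimes>\<^bsub>G\<^esub> \<one>\<^bsub>G\<^esub>) = t [^]\<^bsub>G\<^esub> m \<otimes>\<^bsub>G\<^esub> f \<one>\<^bsub>G\<^esub>" "f (t \<otimes>\<^bsub>G\<^esub> \<one>\<^bsub>G\<^esub>) = s [^]\<^bsub>G\<^esub> n \<otimes>\<^bsub>G\<^esub> f \<one>\<^bsub>G\<^esub>"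
      using cnd one by blast
    have "f s = t [^]\<^bsub>G\<^esub> m" using mn(1) f1 s t by simp
    then have fs: "f s \<in> Ht" unfolding generate_pow[OF t] by blast
    have "f t = s [^]\<^bsub>G\<^esub> n" using mn(2) f1 s t by simp
    then have ft: "f t \<in> Hs" unfolding generate_pow[OF s] by blast
    have stG: "ST G s t" using assms by (simp add: ST_def ST_axioms_def)
    have "STB G s t f"
    proof (rule STB.intro[OF stG], rule STB_axioms.intro)
      show "\<And>x. x \<in> HH \<Longrightarrow> f x \<in> HH" by (rule fH)
      show "\<And>x y. x \<in> HH \<Longrightarrow> y \<in> HH \<Longrightarrow> f (x \<otimes>\<^bsub>G\<^esub> y) = f x \<otimes>\<^bsub>G\<^esub> f y" by (rule fmul)
      show "\<And>x. x \<in> HH \<Longrightarrow> f (f x) = x" using ff by blast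
      show "f s \<in> Ht" by (rule fs)
      show "f t \<in> Hs" by (rule ft)
    qed
    then interpret STB G s t f .
    obtain Q :: "'a monoid" where Q: "group Q" "carrier Q = T" using exists_group_on[OF T_ne] by blast
    have "STBQ G s t f Q" by (rule STBQ.intro[OF \<open>STB G s t f\<close>], rule STBQ_axioms.intro) (use Q in auto)
    then interpret STBQ G s t f Q .
    show ?thesis using partB_Q .
  qed
  show ?thesis using A B by blast
qed


end
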